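(* For every black-white pairing $\rho$ of $\mathbf N$, $$\mathrm{sign}_c(\mathbf N)\,\mathrm{sign}_{BW}(\rho)\prod_{\{b,w\}\in\rho}\mathrm{sign}(b,w)=(-1)^{\#\text{crossings of }\rho}.$$
   Context: $\mathbf N=\{1,\dots,2n\}$ is a set of nodes (arranged counterclockwise on a circle), each colored black or white, with $n$ of each color. A pairing is a partition into 2-element blocks; $\{a,c\},\{b,d\}$ cross if $a<b<c<d$. Black-white pairing: each pair has one black and one white node; with black nodes $b_1<\dots<b_n$ and white nodes $w_1<\dots<w_n$, $\mathrm{sign}_{BW}(\rho)$ is the sign of the permutation $\theta$ of $\{1,\dots,n\}$ with $\rho(b_i)=w_{\theta(i)}$. A couple of consecutive nodes of the same color is a pair $(m,m+1)$, $m\in\{1,\dots,2n\}$, indices mod $2n$ (so $(2n,1)$ allowed), with $m,m+1$ of the same color. For black $b$ and white $w$, $a_{b,w}$ is the number of $m$ with $\min(b,w)\le m<m+1\le\max(b,w)$ and $m,m+1$ the same color; $\mathrm{sign}(b,w)=(-1)^{(|b-w|+a_{b,w}-1)/2}$ (the exponent is an integer). Let $(n_1,n_1+1),\dots,(n_{2k},n_{2k}+1)$ be all couples, $n_1<\dots<n_{2k}$; $k$ of them are black couples with first elements $s_1<\dots<s_k$ and $k$ are white couples with first elements $u_1<\dots<u_k$. If node $1$ is black, put $\varphi(u_i)=2i-1$, $\varphi(s_i)=2i$; if node 1 is white, put $\varphi(s_i)=2i-1$, $\varphi(u_i)=2i$. Then $\mathrm{sign}_c(\mathbf N)$ is the sign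 of the permutation $(\varphi(n_1),\dots,\varphi(n_{2k}))$ in one-line notation, and $\mathrm{sign}_c(\mathbf N)=1$ if $k=0$. *)

theory Defs
  imports "HOL-Combinatorics.Permutations"
begin

text \<open>Nodes are 1..2n; colouring col :: nat => bool, True = black, False = white.\<close>

definition nodes :: "nat \<Rightarrow> nat set" where
  "nodes n = {1..2*n}"

definition balanced_colouring :: "nat \<Rightarrow> (nat \<Rightarrow> bool) \<Rightarrow> bool" where
  "balanced_colouring n col \<longleftrightarrow> card {i \<in> nodes n. col i} = n"

definition bw_pairing :: "nat \<Rightarrow> (nat \<Rightarrow> bool) \<Rightarrow> nat set set \<Rightarrow> bool" where
  "bw_pairing n col \<rho> \<longleftrightarrow>
     (\<forall>B\<in>\<rho>. \<exists>b w. B = {b, w} \<and> b \<in> nodes n \<and> w \<in> nodes n \<and> col b \<and> \<not> col w) \<and>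
     (\<forall>x\<in>nodes n. \<exists>!B. B \<in> \<rho> \<and> x \<in> B)"

definition partner :: "nat set set \<Rightarrow> nat \<Rightarrow> nat" where
  "partner \<rho> x = (THE y. {x, y} \<in> \<rho>)"

definition index_in :: "nat list \<Rightarrow> nat \<Rightarrow> nat" where
  "index_in xs x = (THE i. i < length xs \<and> xs ! i = x)"

definition blacks :: "nat \<Rightarrow> (nat \<Rightarrow> bool) \<Rightarrow> nat list" where
  "blacks n col = sorted_list_of_set {i \<in> nodes n. col i}"

definition whites :: "nat \<Rightarrow> (nat \<Rightarrow> bool) \<Rightarrow> nat list" where
  "whites n col = sorted_list_of_set {i \<in> nodes n. \<not> col i}"

text \<open>theta (0-indexed): rho(b_i) = w_theta(i); identity outside {0..<n}.\<close>
definition bw_theta :: "nat \<Rightarrow> (nat \<Rightarrow> bool) \<Rightarrow> nat set set \<Rightarrow> nat \<Rightarrow> nat" where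
  "bw_theta n col \<rho> i =
     (if i < n then index_in (whites n col) (partner \<rho> (blacks n col ! i)) else i)"

definition sign_BW :: "nat \<Rightarrow> (nat \<Rightarrow> bool) \<Rightarrow> nat set set \<Rightarrow> int" where
  "sign_BW n col \<rho> = sign (bw_theta n col \<rho>)"

definition a_count :: "(nat \<Rightarrow> bool) \<Rightarrow> nat \<Rightarrow> nat \<Rightarrow> nat" where
  "a_count col b w = card {m. min b w \<le> m \<and> m + 1 \<le> max b w \<and> col m = col (m + 1)}"

definition pair_sign :: "(nat \<Rightarrow> bool) \<Rightarrow> nat \<Rightarrow> nat \<Rightarrow> int" where
  "pair_sign col b w =
     (-1) ^ ((max b w - min b w + a_count col b w - 1) div 2)"

definition black_of :: "(nat \<Rightarrow> bool) \<Rightarrow> nat set \<Rightarrow> nat" where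
  "black_of col B = (THE b. b \<in> B \<and> col b)"

definition white_of :: "(nat \<Rightarrow> bool) \<Rightarrow> nat set \<Rightarrow> nat" where
  "white_of col B = (THE w. w \<in> B \<and> \<not> col w)"

text \<open>Crossings: pairs of blocks {a,c},{b,d} with a<b<c<d (each crossing counted once).\<close>
definition crossings :: "nat set set \<Rightarrow> nat" where
  "crossings \<rho> = card {(B1, B2). B1 \<in> \<rho> \<and> B2 \<in> \<rho> \<and>
      (\<exists>a b c d. a < b \<and> b < c \<and> c < d \<and> B1 = {a, c} \<and> B2 = {b, d})}"

definition cnext :: "nat \<Rightarrow> nat \<Rightarrow> nat" where
  "cnext n m = (if m = 2*n then 1 else m + 1)"

text \<open>First elements of couples of consecutive nodes of the same colour (indices mod 2n).\<close>
definition couples :: "nat \<Rightarrow> (nat \<Rightarrow> bool) \<Rightarrow> nat set" where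
  "couples n col = {m \<in> nodes n. col m = col (cnext n m)}"

definition black_couples :: "nat \<Rightarrow> (nat \<Rightarrow> bool) \<Rightarrow> nat list" where
  "black_couples n col = sorted_list_of_set {m \<in> couples n col. col m}"

definition white_couples :: "nat \<Rightarrow> (nat \<Rightarrow> bool) \<Rightarrow> nat list" where
  "white_couples n col = sorted_list_of_set {m \<in> couples n col. \<not> col m}"

text \<open>phi: if node 1 is black, phi(u_i) = 2i-1, phi(s_i) = 2i; if white, phi(s_i) = 2i-1, phi(u_i) = 2i
  (1-indexed i; below with 0-indexed list positions).\<close>
definition couple_phi :: "nat \<Rightarrow> (nat \<Rightarrow> bool) \<Rightarrow> nat \<Rightarrow> nat" where
  "couple_phi n col m =
     (if col m then
        (let i = index_in (black_couples n col) m in if col 1 then 2*i + 2 else 2*i + 1)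
      else
        (let i = index_in (white_couples n col) m in if col 1 then 2*i + 1 else 2*i + 2))"

text \<open>The permutation (phi(n_1),...,phi(n_{2k})) in one-line notation, shifted to 0-indexing
  (i |-> phi(n_{i+1}) - 1 on {0..<2k}, identity elsewhere).\<close>
definition couple_perm :: "nat \<Rightarrow> (nat \<Rightarrow> bool) \<Rightarrow> nat \<Rightarrow> nat" where
  "couple_perm n col i =
     (let C = sorted_list_of_set (couples n col) in
      if i < length C then couple_phi n col (C ! i) - 1 else i)"

definition sign_c :: "nat \<Rightarrow> (nat \<Rightarrow> bool) \<Rightarrow> int" where
  "sign_c n col = sign (couple_perm n col)"

end

theory Submission
  imports Defs
begin

definition inv_count :: "(nat \<Rightarrow> nat) \<Rightarrow> nat \<Rightarrow> nat" where
  "inv_count p m = card {(i,j). i < j \<and> j < m \<and> p j < p i}"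

lemma inv_set_finite: "finite {(i,j). i < j \<and> j < m \<and> (p::nat\<Rightarrow>nat) j < p i}"
  by (rule finite_subset[of _ "{..<m} \<times> {..<m}"]) auto

lemma no_desc_mono:
  assumes "\<And>i. Suc i < m \<Longrightarrow> p i < p (Suc i)"
  shows "i < j \<Longrightarrow> j < m \<Longrightarrow> (p::nat\<Rightarrow>nat) i < p j"
proof (induction j)
  case 0 then show ?case by simp
next
  case (Suc j)
  then show ?case using assms[of j] by (cases "i = j") auto
qed

lemma permutes_inv0_id:
  assumes p: "p permutes {..<m}" and inv0: "inv_count p m = 0"
  shows "p = id"
proof -
  have emp: "{(i,j). i < j \<and> j < m \<and> p j < p i} = {}"
    using inv0 inv_set_finite[of m p] unfolding inv_count_def by simp
  have mono: "i < j \<Longrightarrow> j < m \<Longrightarrow> p i < p j" for i j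
  proof -
    assume "i < j" "j < m"
    moreover have "p i \<noteq> p j" using p \<open>i<j\<close> by (metis less_irrefl permutes_inj injD)
    ultimately show ?thesis using emp by (auto simp: set_eq_iff) (metis linorder_neqE_nat)
  qed
  have "sorted (map p [0..<m])" unfolding sorted_iff_nth_mono
    by (auto intro: less_imp_le mono simp: le_less)
  moreover have "distinct (map p [0..<m])"
    using p by (simp add: distinct_map permutes_inj_on[OF p])
  moreover have "set (map p [0..<m]) = {..<m}"
    using permutes_image[OF p] by (simp add: atLeast0LessThan)
  ultimately have "map p [0..<m] = [0..<m]"
    by (intro sorted_distinct_set_unique) (auto simp: atLeast0LessThan)
  hence "\<And>i. i < m \<Longrightarrow> p i = i"
    by (metis add_0 diff_zero length_upt nth_map nth_upt)
  thus ?thesis using p unfolding permutes_def by (metis eq_id_iff lessThan_iff)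
qed

lemma inv_count_step:
  assumes i: "Suc i < m" and d: "p (Suc i) < (p i::nat)"
  shows "inv_count p m = Suc (inv_count (p \<circ> Transposition.transpose i (Suc i)) m)"
proof -
  let ?s = "Transposition.transpose i (Suc i)"
  define g where "g = (\<lambda>(a,b). (?s a, ?s b))"
  let ?P = "{(a,b). a < b \<and> b < m \<and> p b < p a}"
  let ?Q = "{(a,b). a < b \<and> b < m \<and> (p \<circ> ?s) b < (p \<circ> ?s) a}"
  have key: "a < b \<Longrightarrow> (a,b) \<noteq> (i, Suc i) \<Longrightarrow> ?s a < ?s b" for a b
    by (auto simp: Transposition.transpose_def)
  have keym: "b < m \<Longrightarrow> ?s b < m" for b using i
    by (auto simp: Transposition.transpose_def)
  have ss: "?s (?s x) = x" for x by simp
  have img: "?P - {(i, Suc i)} = g ` ?Q"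
  proof (rule set_eqI, rule iffI)
    fix x assume x: "x \<in> ?P - {(i, Suc i)}"
    obtain a b where ab: "x = (a,b)" by force
    have ab1: "a < b" "b < m" "p b < p a" "(a,b) \<noteq> (i, Suc i)" using x ab by auto
    have "?s a < ?s b" using key[OF ab1(1) ab1(4)] .
    moreover have "?s b < m" using keym[OF ab1(2)] .
    moreover have "(p \<circ> ?s) (?s b) < (p \<circ> ?s) (?s a)" using ab1(3) by simp
    ultimately have m1: "(?s a, ?s b) \<in> ?Q" by simp
    have m2: "x = g (?s a, ?s b)" using ab by (simp add: g_def)
    show "x \<in> g ` ?Q" by (rule rev_image_eqI[where f=g, OF m1 m2])
  next
    fix x assume "x \<in> g ` ?Q"
    then obtain a b where ab: "(a,b) \<in> ?Q" "x = (?s a, ?s b)" by (auto simp: g_def)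
    have ab1: "a < b" "b < m" "p (?s b) < p (?s a)" using ab(1) by auto
    have ne: "(a,b) \<noteq> (i, Suc i)"
    proof
      assume "(a,b) = (i, Suc i)"
      hence "p (?s b) = p i" "p (?s a) = p (Suc i)" by auto
      thus False using ab1(3) d by simp
    qed
    have 1: "?s a < ?s b" using key[OF ab1(1) ne] .
    have 2: "?s b < m" using keym[OF ab1(2)] .
    have 3: "(?s a, ?s b) \<noteq> (i, Suc i)"
    proof
      assume "(?s a, ?s b) = (i, Suc i)"
      hence e: "?s a = i" "?s b = Suc i" by auto
      have "a = ?s (?s a)" "b = ?s (?s b)" using ss by auto
      hence "a = Suc i" "b = i" using e by auto
      thus False using ab1(1) by simp
    qed
    show "x \<in> ?P - {(i, Suc i)}" using ab(2) 1 2 3 ab1(3) by simp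
  qed
  have injg: "inj g" unfolding g_def inj_def by (auto, metis ss, metis ss)
  have mem: "(i, Suc i) \<in> ?P" using i d by auto
  have fin: "finite ?P" by (rule inv_set_finite)
  have "card ?P = Suc (card (?P - {(i, Suc i)}))"
    by (rule card_Suc_Diff1[OF fin mem, symmetric])
  also have "card (?P - {(i, Suc i)}) = card ?Q"
    unfolding img by (rule card_image[OF inj_on_subset[OF injg subset_UNIV]])
  finally show ?thesis unfolding inv_count_def by simp
qed

lemma sign_inv_count:
  assumes "p permutes {..<m}"
  shows "sign p = (-1::int) ^ inv_count p m"
  using assms
proof (induction "inv_count p m" arbitrary: p)
  case 0
  have "p = id" using permutes_inv0_id[of p m] 0 by simp
  then show ?case using 0 by simp
next
  case (Suc k)
  have "\<exists>i. Suc i < m \<and> p (Suc i) < p i"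
  proof (rule ccontr)
    assume "\<not> ?thesis"
    hence "Suc i < m \<Longrightarrow> p i < p (Suc i)" for i
      using Suc.prems permutes_inj[OF Suc.prems]
      by (metis injD linorder_neqE_nat n_not_Suc_n)
    hence e: "{(i,j). i < j \<and> j < m \<and> p j < p i} = {}"
      using no_desc_mono[of m p] by (auto dest: less_asym)
    have "Suc k = card {(i,j). i < j \<and> j < m \<and> p j < p i}"
      using Suc.hyps(2) unfolding inv_count_def .
    thus False unfolding e by simp
  qed
  then obtain i where i: "Suc i < m" "p (Suc i) < p i" by blast
  let ?s = "Transposition.transpose i (Suc i)"
  have sp: "?s permutes {..<m}" using i by (intro permutes_swap_id) auto
  have qp: "(p \<circ> ?s) permutes {..<m}" using permutes_compose[OF sp Suc.prems] by simp
  have ic: "inv_count p m = Suc (inv_count (p \<circ> ?s) m)" by (rule inv_count_step[OF i])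
  hence "k = inv_count (p \<circ> ?s) m" using Suc.hyps(2) by simp
  hence IH: "sign (p \<circ> ?s) = (-1) ^ inv_count (p \<circ> ?s) m" using Suc.hyps(1) qp by blast
  have "sign (p \<circ> ?s) = sign p * sign ?s"
    by (rule sign_compose) (use Suc.prems sp in \<open>auto intro: permutation_permutes[THEN iffD2]\<close>)
  also have "sign ?s = -1" by (simp add: sign_swap_id)
  finally have "sign (p \<circ> ?s) = - sign p" by (simp only: mult_minus1_right)
  thus ?case using IH ic by (simp del: comp_apply)
qed

primrec tri :: "nat \<Rightarrow> nat" where
  "tri 0 = 0" | "tri (Suc k) = tri k + k"

primrec nbR :: "(nat \<Rightarrow> bool) \<Rightarrow> nat \<Rightarrow> nat" where
  "nbR c 0 = 0" | "nbR c (Suc L) = nbR c L + (if c (Suc L) then 1 else 0)"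
primrec nwR :: "(nat \<Rightarrow> bool) \<Rightarrow> nat \<Rightarrow> nat" where
  "nwR c 0 = 0" | "nwR c (Suc L) = nwR c L + (if c (Suc L) then 0 else 1)"
primrec kbR :: "(nat \<Rightarrow> bool) \<Rightarrow> nat \<Rightarrow> nat" where
  "kbR c 0 = 0" | "kbR c (Suc L) = kbR c L + (if 1 \<le> L \<and> c L \<and> c (Suc L) then 1 else 0)"
primrec kwR :: "(nat \<Rightarrow> bool) \<Rightarrow> nat \<Rightarrow> nat" where
  "kwR c 0 = 0" | "kwR c (Suc L) = kwR c L + (if 1 \<le> L \<and> \<not> c L \<and> \<not> c (Suc L) then 1 else 0)"
definition dR :: "(nat \<Rightarrow> bool) \<Rightarrow> nat \<Rightarrow> nat" where
  "dR c x = x + kbR c x + kwR c x"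
definition qterm :: "(nat \<Rightarrow> bool) \<Rightarrow> nat \<Rightarrow> nat" where
  "qterm c x = (if c x then (dR c x + 1) div 2 else dR c x div 2)"
primrec PR :: "(nat \<Rightarrow> bool) \<Rightarrow> nat \<Rightarrow> nat" where
  "PR c 0 = 0" | "PR c (Suc L) = PR c L + (if c (Suc L) then nwR c L else 0)"
primrec QR :: "(nat \<Rightarrow> bool) \<Rightarrow> nat \<Rightarrow> nat" where
  "QR c 0 = 0" | "QR c (Suc L) = QR c L + qterm c (Suc L)"
primrec BWR :: "(nat \<Rightarrow> bool) \<Rightarrow> nat \<Rightarrow> nat" where
  "BWR c 0 = 0" | "BWR c (Suc L) = BWR c L + (if 1 \<le> L \<and> \<not> c L \<and> \<not> c (Suc L) then kbR c L else 0)"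

definition Fv :: "nat \<Rightarrow> nat \<Rightarrow> nat \<Rightarrow> nat \<Rightarrow> bool \<Rightarrow> nat" where
  "Fv nb nw kb kw c1 = tri nw + tri kb + kb*kw + nb*kb + nw*kb + (if c1 then nb+nw+kb else 0)"

lemma div2_gen: "(\<And>q r. (x::nat) = 2*q + r \<Longrightarrow> r < 2 \<Longrightarrow> P q) \<Longrightarrow> P (x div 2)"
  by (metis div_mult_mod_eq mod_less_divisor mult.commute zero_less_numeral)
lemma ar_bb: fixes nb nw kb kw :: nat
  assumes "2*kb + 2*nw + (if c1 then 1 else 0) + 1 = 2*kw + 2*nb + (if c1 then 0 else 1)"
  shows "even ((nw + (nb+nw+kb+kw+3) div 2) + (2*kb + kw + nb + 1 + nw + (if c1 then 2 else 0)))"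
  apply (rule div2_gen[where P="\<lambda>q. even ((nw + q) + (2*kb + kw + nb + 1 + nw + (if c1 then 2 else 0)))"])
  using assms by (cases c1; simp; presburger)
lemma ar_wb: fixes nb nw kb kw :: nat
  assumes "2*kb + 2*nw + (if c1 then 1 else 0) = 2*kw + 2*nb + (if c1 then 0 else 1) + 1"
  shows "even ((nw + (nb+nw+kb+kw+2) div 2) + (kb + (if c1 then 1 else 0)))"
  apply (rule div2_gen[where P="\<lambda>q. even ((nw + q) + (kb + (if c1 then 1 else 0)))"])
  using assms by (cases c1; simp; presburger)
lemma ar_bw: fixes nb nw kb kw :: nat
  assumes "2*kb + 2*nw + (if c1 then 1 else 0) + 1 = 2*kw + 2*nb + (if c1 then 0 else 1)"
  shows "even (((nb+nw+kb+kw+1) div 2) + (nw + kb + (if c1 then 1 else 0)))"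
  apply (rule div2_gen[where P="\<lambda>q. even (q + (nw + kb + (if c1 then 1 else 0)))"])
  using assms by (cases c1; simp; presburger)
lemma ar_ww: fixes nb nw kb kw :: nat
  assumes "2*kb + 2*nw + (if c1 then 1 else 0) = 2*kw + 2*nb + (if c1 then 0 else 1) + 1"
  shows "even ((kb + (nb+nw+kb+kw+2) div 2) + (nw + 2*kb + (if c1 then 1 else 0)))"
  apply (rule div2_gen[where P="\<lambda>q. even ((kb + q) + (nw + 2*kb + (if c1 then 1 else 0)))"])
  using assms by (cases c1; simp; presburger)

lemma ar_comb: "even ((E::nat) + F) \<Longrightarrow> even (dE + dF) \<Longrightarrow> even ((E + dE) + (F + dF))"
  by presburger

lemma nbw_L: "nbR c L + nwR c L = L" by (induction L) auto

lemma E_lemma: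
  assumes "1 \<le> L"
  shows "2*kbR c L + 2*nwR c L + (if c 1 then 1 else 0) + (if c L then 1 else 0)
         = 2*kwR c L + 2*nbR c L + (if c 1 then 0 else 1) + (if c L then 0 else 1)
       \<and> even (BWR c L + PR c L + QR c L + Fv (nbR c L) (nwR c L) (kbR c L) (kwR c L) (c 1))"
  using assms
proof (induction L rule: nat_induct_at_least)
  case base
  show ?case by (simp add: Fv_def qterm_def dR_def)
next
  case (Suc L)
  let ?nb = "nbR c L" and ?nw = "nwR c L" and ?kb = "kbR c L" and ?kw = "kwR c L"
  let ?E = "BWR c L + PR c L + QR c L" and ?F = "Fv ?nb ?nw ?kb ?kw (c 1)"
  have R: "2*?kb + 2*?nw + (if c 1 then 1 else 0) + (if c L then 1 else 0)
         = 2*?kw + 2*?nb + (if c 1 then 0 else 1) + (if c L then 0 else 1)"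
   and ev: "even (?E + ?F)" using Suc.IH by auto
  have L: "L = ?nb + ?nw" using nbw_L[of c L] by simp
  have L1: "1 \<le> L" by fact
  show ?case
  proof (cases "c (Suc L)")
    case True note cs = this
    show ?thesis
    proof (cases "c L")
      case True
      have F: "Fv (?nb+1) ?nw (?kb+1) ?kw (c 1) = ?F + (2*?kb + ?kw + ?nb + 1 + ?nw + (if c 1 then 2 else 0))"
        by (simp add: Fv_def algebra_simps)
      have d: "dR c (Suc L) = ?nb + ?nw + ?kb + ?kw + 2" using L1 cs True L by (simp add: dR_def)
      have E: "BWR c (Suc L) + PR c (Suc L) + QR c (Suc L) = ?E + (?nw + (?nb + ?nw + ?kb + ?kw + 3) div 2)"
        using L1 cs True by (simp add: qterm_def d)
      have R1: "2*?kb + 2*?nw + (if c 1 then 1 else 0) + 1 = 2*?kw + 2*?nb + (if c 1 then 0 else 1)"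
        using R True by simp
      have "even (BWR c (Suc L) + PR c (Suc L) + QR c (Suc L) + Fv (?nb+1) ?nw (?kb+1) ?kw (c 1))"
        unfolding E F by (rule ar_comb[OF ev ar_bb[OF R1]])
      then show ?thesis using L1 cs True R by simp
    next
      case False
      have F: "Fv (?nb+1) ?nw ?kb ?kw (c 1) = ?F + (?kb + (if c 1 then 1 else 0))"
        by (simp add: Fv_def algebra_simps)
      have d: "dR c (Suc L) = ?nb + ?nw + ?kb + ?kw + 1" using L1 cs False L by (simp add: dR_def)
      have E: "BWR c (Suc L) + PR c (Suc L) + QR c (Suc L) = ?E + (?nw + (?nb + ?nw + ?kb + ?kw + 2) div 2)"
        using L1 cs False by (simp add: qterm_def d)
      have R1: "2*?kb + 2*?nw + (if c 1 then 1 else 0) = 2*?kw + 2*?nb + (if c 1 then 0 else 1) + 1"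
        using R False by simp
      have "even (BWR c (Suc L) + PR c (Suc L) + QR c (Suc L) + Fv (?nb+1) ?nw ?kb ?kw (c 1))"
        unfolding E F by (rule ar_comb[OF ev ar_wb[OF R1]])
      then show ?thesis using L1 cs False R by simp
    qed
  next
    case False note cs = this
    show ?thesis
    proof (cases "c L")
      case True
      have F: "Fv ?nb (?nw+1) ?kb ?kw (c 1) = ?F + (?nw + ?kb + (if c 1 then 1 else 0))"
        by (simp add: Fv_def algebra_simps)
      have d: "dR c (Suc L) = ?nb + ?nw + ?kb + ?kw + 1" using L1 cs True L by (simp add: dR_def)
      have E: "BWR c (Suc L) + PR c (Suc L) + QR c (Suc L) = ?E + ((?nb + ?nw + ?kb + ?kw + 1) div 2)"
        using L1 cs True by (simp add: qterm_def d)
      have R1: "2*?kb + 2*?nw + (if c 1 then 1 else 0) + 1 = 2*?kw + 2*?nb + (if c 1 then 0 else 1)"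
        using R True by simp
      have "even (BWR c (Suc L) + PR c (Suc L) + QR c (Suc L) + Fv ?nb (?nw+1) ?kb ?kw (c 1))"
        unfolding E F by (rule ar_comb[OF ev ar_bw[OF R1]])
      then show ?thesis using L1 cs True R by simp
    next
      case False
      have F: "Fv ?nb (?nw+1) ?kb (?kw+1) (c 1) = ?F + (?nw + 2*?kb + (if c 1 then 1 else 0))"
        by (simp add: Fv_def algebra_simps)
      have d: "dR c (Suc L) = ?nb + ?nw + ?kb + ?kw + 2" using L1 cs False L by (simp add: dR_def)
      have E: "BWR c (Suc L) + PR c (Suc L) + QR c (Suc L) = ?E + (?kb + (?nb + ?nw + ?kb + ?kw + 2) div 2)"
        using L1 cs False by (simp add: qterm_def d)
      have R1: "2*?kb + 2*?nw + (if c 1 then 1 else 0) = 2*?kw + 2*?nb + (if c 1 then 0 else 1) + 1"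
        using R False by simp
      have "even (BWR c (Suc L) + PR c (Suc L) + QR c (Suc L) + Fv ?nb (?nw+1) ?kb (?kw+1) (c 1))"
        unfolding E F by (rule ar_comb[OF ev ar_ww[OF R1]])
      then show ?thesis using L1 cs False R by simp
    qed
  qed
qed

definition crsN :: "nat \<Rightarrow> nat \<Rightarrow> nat \<Rightarrow> nat \<Rightarrow> bool" where
  "crsN x y u v \<longleftrightarrow> min x y < min u v \<and> min u v < max x y \<and> max x y < max u v"

lemma pair_ident:
  fixes x y u v :: nat
  assumes "x < u" "x \<noteq> y" "x \<noteq> v" "u \<noteq> y" "u \<noteq> v" "y \<noteq> v"
  shows "even (of_bool (v < y) + of_bool (crsN x y u v) + of_bool (crsN u v x y) + 1
              + of_bool (y < u) + of_bool (v < x) :: nat)"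
  using assms unfolding crsN_def min_def max_def
  by (cases "x < y"; cases "u < v"; cases "y < u"; cases "v < x"; cases "y < v"; simp)

lemma split_sum:
  fixes f :: "nat \<Rightarrow> nat \<Rightarrow> nat"
  shows "(\<Sum>i<n. \<Sum>j<n. f i j) = (\<Sum>i<n. \<Sum>j<n. of_bool (i < j) * (f i j + f j i)) + (\<Sum>i<n. f i i)"
proof -
  have "(\<Sum>i<n. \<Sum>j<n. f i j) = (\<Sum>i<n. \<Sum>j<n. of_bool (i < j) * f i j + of_bool (j < i) * f i j + of_bool (i = j) * f i j)"
    by (intro sum.cong refl) (auto simp: not_less_iff_gr_or_eq)
  also have "\<dots> = (\<Sum>i<n. \<Sum>j<n. of_bool (i < j) * f i j) + (\<Sum>i<n. \<Sum>j<n. of_bool (j < i) * f i j) + (\<Sum>i<n. \<Sum>j<n. of_bool (i = j) * f i j)"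
    by (simp add: sum.distrib)
  also have "(\<Sum>i<n. \<Sum>j<n. of_bool (j < i) * f i j) = (\<Sum>i<n. \<Sum>j<n. of_bool (i < j) * f j i)"
    by (rule sum.swap)
  also have "(\<Sum>i<n. \<Sum>j<n. of_bool (i = j) * f i j) = (\<Sum>i<n. f i i)"
  proof (intro sum.cong refl)
    fix i assume "i \<in> {..<n}"
    have "(\<Sum>j<n. of_bool (i = j) * f i j) = (\<Sum>j<n. if i = j then f i j else 0)"
      by (intro sum.cong refl) simp
    thus "(\<Sum>j<n. of_bool (i = j) * f i j) = f i i" using \<open>i \<in> {..<n}\<close> by (simp add: sum.delta)
  qed
  finally show ?thesis by (simp add: sum.distrib distrib_left)
qed

lemma tri_sum: "tri n = (\<Sum>i<n. \<Sum>j<n. of_bool (i < j) :: nat)"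
proof (induction n)
  case 0 show ?case by simp
next
  case (Suc n)
  have "(\<Sum>i<Suc n. \<Sum>j<Suc n. of_bool (i < j) :: nat) = (\<Sum>i<n. \<Sum>j<n. of_bool (i < j)) + (\<Sum>i<n. 1::nat)"
    by (simp add: sum.distrib, auto)
  thus ?case using Suc by simp
qed

lemma pair_parity:
  fixes bb ww :: "nat \<Rightarrow> nat"
  assumes mono: "\<And>i j. i < j \<Longrightarrow> j < n \<Longrightarrow> bb i < bb j"
    and bw: "\<And>i j. i < n \<Longrightarrow> j < n \<Longrightarrow> bb i \<noteq> ww j"
    and ww: "\<And>i j. i < n \<Longrightarrow> j < n \<Longrightarrow> i \<noteq> j \<Longrightarrow> ww i \<noteq> ww j"
  shows "even ((\<Sum>i<n. \<Sum>j<n. of_bool (i < j \<and> ww j < ww i))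
             + (\<Sum>i<n. \<Sum>j<n. of_bool (crsN (bb i) (ww i) (bb j) (ww j)))
             + tri n
             + (\<Sum>i<n. \<Sum>j<n. of_bool (ww i < bb j))
             + (\<Sum>i<n. of_bool (ww i < bb i)) :: nat)"
proof -
  let ?g = "\<lambda>i j. of_bool (i < j) * (of_bool (ww j < ww i) + of_bool (crsN (bb i) (ww i) (bb j) (ww j))
       + of_bool (crsN (bb j) (ww j) (bb i) (ww i)) + 1 + of_bool (ww i < bb j) + of_bool (ww j < bb i)) :: nat"
  have ev: "even (\<Sum>i<n. \<Sum>j<n. ?g i j)"
  proof (intro dvd_sum)
    fix i j assume "i \<in> {..<n}" "j \<in> {..<n}"
    thus "even (?g i j)"
      using pair_ident[of "bb i" "bb j" "ww i" "ww j"] mono[of i j] bw[of i j] bw[of j i] bw[of i i] bw[of j j] ww[of i j]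
      by (cases "i < j") auto
  qed
  have crs_diag: "crsN x y x y = False" for x y by (simp add: crsN_def)
  have C: "(\<Sum>i<n. \<Sum>j<n. of_bool (crsN (bb i) (ww i) (bb j) (ww j)) :: nat)
     = (\<Sum>i<n. \<Sum>j<n. of_bool (i < j) * (of_bool (crsN (bb i) (ww i) (bb j) (ww j)) + of_bool (crsN (bb j) (ww j) (bb i) (ww i))))"
    using split_sum[of "\<lambda>i j. of_bool (crsN (bb i) (ww i) (bb j) (ww j))" n] by (simp add: crs_diag)
  have P: "(\<Sum>i<n. \<Sum>j<n. of_bool (ww i < bb j) :: nat)
     = (\<Sum>i<n. \<Sum>j<n. of_bool (i < j) * (of_bool (ww i < bb j) + of_bool (ww j < bb i))) + (\<Sum>i<n. of_bool (ww i < bb i))"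
    using split_sum[of "\<lambda>i j. of_bool (ww i < bb j)" n] by simp
  have I: "(\<Sum>i<n. \<Sum>j<n. of_bool (i < j \<and> ww j < ww i) :: nat) = (\<Sum>i<n. \<Sum>j<n. of_bool (i < j) * of_bool (ww j < ww i))"
    by (intro sum.cong refl) simp
  have G: "(\<Sum>i<n. \<Sum>j<n. ?g i j) = (\<Sum>i<n. \<Sum>j<n. of_bool (i < j) * of_bool (ww j < ww i))
     + (\<Sum>i<n. \<Sum>j<n. of_bool (i < j) * (of_bool (crsN (bb i) (ww i) (bb j) (ww j)) + of_bool (crsN (bb j) (ww j) (bb i) (ww i))))
     + (\<Sum>i<n. \<Sum>j<n. of_bool (i < j))
     + (\<Sum>i<n. \<Sum>j<n. of_bool (i < j) * (of_bool (ww i < bb j) + of_bool (ww j < bb i)))"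
    by (simp add: sum.distrib distrib_left algebra_simps)
  show ?thesis unfolding I C P tri_sum using ev G by presburger
qed

lemma A_card: "kbR c x + kwR c x = card {m. 1 \<le> m \<and> m + 1 \<le> x \<and> c m = c (m+1)}"
proof (induction x)
  case 0 show ?case by simp
next
  case (Suc x)
  let ?S = "\<lambda>x. {m. 1 \<le> m \<and> m + 1 \<le> x \<and> c m = c (m+1)}"
  have e: "?S (Suc x) = (if 1 \<le> x \<and> c x = c (Suc x) then insert x (?S x) else ?S x)"
    by (auto simp: le_Suc_eq)
  have fin: "finite (?S x)" by (rule finite_subset[of _ "{..x}"]) auto
  have nx: "x \<notin> ?S x" by simp
  have "card (?S (Suc x)) = card (?S x) + (if 1 \<le> x \<and> c x = c (Suc x) then 1 else 0)"
    unfolding e using fin nx by simp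
  moreover have "kbR c (Suc x) + kwR c (Suc x) = kbR c x + kwR c x + (if 1 \<le> x \<and> c x = c (Suc x) then 1 else 0)"
    by (cases "c x"; cases "c (Suc x)") simp_all
  ultimately show ?case using Suc by simp
qed

lemma a_count_eq:
  assumes "1 \<le> min b w"
  shows "a_count c b w = (kbR c (max b w) + kwR c (max b w)) - (kbR c (min b w) + kwR c (min b w))"
proof -
  let ?S = "\<lambda>x. {m. 1 \<le> m \<and> m + 1 \<le> x \<and> c m = c (m+1)}"
  have sub: "?S (min b w) \<subseteq> ?S (max b w)" by auto
  have fin: "finite (?S (max b w))" by (rule finite_subset[of _ "{..max b w}"]) auto
  have "{m. min b w \<le> m \<and> m + 1 \<le> max b w \<and> c m = c (m + 1)} = ?S (max b w) - ?S (min b w)"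
    using assms by auto
  hence "a_count c b w = card (?S (max b w)) - card (?S (min b w))"
    unfolding a_count_def using card_Diff_subset[OF finite_subset[OF sub fin] sub] by simp
  thus ?thesis by (simp add: A_card)
qed

lemma dR_Suc: "1 \<le> x \<Longrightarrow> dR c (Suc x) = dR c x + 1 + (if c x = c (Suc x) then 1 else 0)"
  by (cases "c x"; cases "c (Suc x)") (simp_all add: dR_def)

lemma dR_parity: "1 \<le> x \<Longrightarrow> odd (dR c x) \<longleftrightarrow> c x = c 1"
proof (induction x rule: nat_induct_at_least)
  case base show ?case by (simp add: dR_def)
next
  case (Suc x) thus ?case by (cases "c x"; cases "c (Suc x)"; cases "c 1") (simp_all add: dR_Suc)
qed

lemma A_mono: "x \<le> y \<Longrightarrow> kbR c x + kwR c x \<le> kbR c y + kwR c y"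
proof (induction y)
  case 0 then show ?case by simp
next
  case (Suc y) then show ?case by (cases "x = Suc y") (auto simp: le_Suc_eq)
qed

lemma dR_mono: "1 \<le> x \<Longrightarrow> x < y \<Longrightarrow> dR c x < dR c y"
proof (induction y)
  case 0 then show ?case by simp
next
  case (Suc y)
  show ?case
  proof (cases "x = y")
    case True then show ?thesis using Suc dR_Suc[of y c] by simp
  next
    case False
    hence "x < y" using Suc by simp
    then show ?thesis using Suc dR_Suc[of y c] by simp
  qed
qed

lemma dR_diff: "x \<le> y \<Longrightarrow> dR c y - dR c x = (y - x) + ((kbR c y + kwR c y) - (kbR c x + kwR c x))"
  using A_mono[of x y c] by (simp add: dR_def)

lemma ar1: fixes p q :: nat assumes "p < q" "odd (p+q)"
  shows "even ((q-p-1) div 2 + q div 2 + (p+1) div 2)"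
proof (cases "even p")
  case True
  then obtain a where a: "p = 2*a" by (auto elim: evenE)
  have "odd q" using True assms(2) by simp
  then obtain b where b: "q = 2*b+1" by (auto elim: oddE)
  have "a \<le> b" using assms(1) a b by simp
  have "q - p - 1 = 2*(b-a)" using a b \<open>a \<le> b\<close> by simp
  thus ?thesis using a b \<open>a \<le> b\<close> by simp
next
  case False
  then obtain a where a: "p = 2*a+1" by (auto elim: oddE)
  have "even q" using False assms(2) by simp
  then obtain b where b: "q = 2*b" by (auto elim: evenE)
  have "a < b" using assms(1) a b by simp
  have "q - p - 1 = 2*(b-a-1)" using a b \<open>a < b\<close> by simp
  thus ?thesis using a b \<open>a < b\<close> by simp
qed
lemma ar2: fixes p q :: nat assumes "p < q" "odd (p+q)"
  shows "even ((q-p-1) div 2 + p div 2 + (q+1) div 2 + 1)"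
proof (cases "even p")
  case True
  then obtain a where a: "p = 2*a" by (auto elim: evenE)
  have "odd q" using True assms(2) by simp
  then obtain b where b: "q = 2*b+1" by (auto elim: oddE)
  have "a \<le> b" using assms(1) a b by simp
  have "q - p - 1 = 2*(b-a)" using a b \<open>a \<le> b\<close> by simp
  thus ?thesis using a b \<open>a \<le> b\<close> by simp
next
  case False
  then obtain a where a: "p = 2*a+1" by (auto elim: oddE)
  have "even q" using False assms(2) by simp
  then obtain b where b: "q = 2*b" by (auto elim: evenE)
  have "a < b" using assms(1) a b by simp
  have "q - p - 1 = 2*(b-a-1)" using a b \<open>a < b\<close> by simp
  thus ?thesis using a b \<open>a < b\<close> by simp
qed

lemma exp_parity:
  assumes "1 \<le> b" "1 \<le> w" "b \<noteq> w" "col b" "\<not> col w"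
  shows "even ((max b w - min b w + a_count col b w - 1) div 2 + dR col w div 2 + (dR col b + 1) div 2 + of_bool (w < b))"
proof -
  have ac: "a_count col b w = (kbR col (max b w) + kwR col (max b w)) - (kbR col (min b w) + kwR col (min b w))"
    using assms by (intro a_count_eq) simp
  have D: "max b w - min b w + a_count col b w = dR col (max b w) - dR col (min b w)"
    using dR_diff[of "min b w" "max b w" col] ac by simp
  have pb: "odd (dR col b) \<longleftrightarrow> col b = col 1" using dR_parity assms by blast
  have pw: "odd (dR col w) \<longleftrightarrow> col w = col 1" using dR_parity assms by blast
  have odd: "odd (dR col b + dR col w)" using pb pw assms by auto
  show ?thesis
  proof (cases "b < w")
    case True
    have lt: "dR col b < dR col w" using dR_mono assms True by blast
    show ?thesis using ar1[OF lt] odd True D by (simp add: max_def min_def add.commute)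
  next
    case False
    hence wb: "w < b" using assms by simp
    have lt: "dR col w < dR col b" using dR_mono assms wb by blast
    show ?thesis using ar2[OF lt] odd wb D by (simp add: max_def min_def add.commute add.left_commute)
  qed
qed

lemma index_in_nth: "distinct xs \<Longrightarrow> i < length xs \<Longrightarrow> index_in xs (xs!i) = i"
  unfolding index_in_def by (rule the_equality) (auto simp: nth_eq_iff_index_eq)

lemma index_in_props: "distinct xs \<Longrightarrow> x \<in> set xs \<Longrightarrow> index_in xs x < length xs \<and> xs ! (index_in xs x) = x"
  by (metis in_set_conv_nth index_in_nth)

lemma sls_basic:
  assumes "finite A"
  shows "distinct (sorted_list_of_set A)" "set (sorted_list_of_set A) = A"
        "length (sorted_list_of_set A) = card A" "sorted_wrt (<) (sorted_list_of_set A)"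
  using assms by (auto simp: strict_sorted_list_of_set)

lemma sls_less_iff:
  assumes "finite A" "i < card A" "j < card A"
  shows "sorted_list_of_set A ! i < sorted_list_of_set A ! j \<longleftrightarrow> i < j"
proof -
  have s: "sorted_wrt (<) (sorted_list_of_set A)" and l: "length (sorted_list_of_set A) = card A"
    using sls_basic[OF assms(1)] by auto
  show ?thesis
    using sorted_wrt_nth_less[OF s, of i j] sorted_wrt_nth_less[OF s, of j i] assms l
    by (metis less_asym linorder_neqE_nat)
qed

lemma sls_idx:
  assumes "finite A" "x \<in> A"
  shows "index_in (sorted_list_of_set A) x < card A" "sorted_list_of_set A ! index_in (sorted_list_of_set A) x = x"
  using index_in_props[of "sorted_list_of_set A" x] sls_basic[OF assms(1)] assms by auto

lemma sls_idx_less_iff: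
  assumes "finite A" "x \<in> A" "y \<in> A"
  shows "index_in (sorted_list_of_set A) x < index_in (sorted_list_of_set A) y \<longleftrightarrow> x < y"
  using sls_less_iff[OF assms(1) sls_idx(1)[OF assms(1,2)] sls_idx(1)[OF assms(1,3)]]
        sls_idx(2)[OF assms(1,2)] sls_idx(2)[OF assms(1,3)] by simp

lemma sls_idx_nth:
  assumes "finite A" "i < card A"
  shows "index_in (sorted_list_of_set A) (sorted_list_of_set A ! i) = i"
  using index_in_nth[of "sorted_list_of_set A" i] sls_basic[OF assms(1)] assms(2) by simp

lemma sls_nth_in:
  assumes "finite A" "i < card A"
  shows "sorted_list_of_set A ! i \<in> A"
  using sls_basic[OF assms(1)] assms(2) by (metis nth_mem)

lemma sls_idx_bij:
  assumes "finite A"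
  shows "bij_betw (index_in (sorted_list_of_set A)) A {..<card A}"
proof (rule bij_betw_imageI)
  show "inj_on (index_in (sorted_list_of_set A)) A"
    by (metis assms inj_onI sls_idx(2))
  show "index_in (sorted_list_of_set A) ` A = {..<card A}"
  proof
    show "index_in (sorted_list_of_set A) ` A \<subseteq> {..<card A}" using sls_idx(1)[OF assms] by auto
    show "{..<card A} \<subseteq> index_in (sorted_list_of_set A) ` A"
    proof
      fix i assume "i \<in> {..<card A}"
      thus "i \<in> index_in (sorted_list_of_set A) ` A"
        using sls_idx_nth[OF assms, of i] sls_nth_in[OF assms, of i] by (metis image_eqI lessThan_iff)
    qed
  qed
qed

lemma card_pairs: "card {(i,j). i < (m::nat) \<and> j < m \<and> Q i j} = (\<Sum>i<m. \<Sum>j<m. of_bool (Q i j) :: nat)"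
proof -
  have "(\<Sum>i<m. \<Sum>j<m. of_bool (Q i j) :: nat) = (\<Sum>(i,j)\<in>{..<m}\<times>{..<m}. of_bool (Q i j))"
    by (rule sum.cartesian_product)
  also have "\<dots> = (\<Sum>x\<in>{..<m}\<times>{..<m}. of_bool (case x of (i,j) \<Rightarrow> Q i j))"
    by (intro sum.cong refl) auto
  also have "\<dots> = card (({..<m}\<times>{..<m}) \<inter> {x. case x of (i,j) \<Rightarrow> Q i j})"
    by (subst sum_of_bool_eq) auto
  also have "({..<m}\<times>{..<m}) \<inter> {x. case x of (i,j) \<Rightarrow> Q i j} = {(i,j). i < m \<and> j < m \<and> Q i j}"
    by auto
  finally show ?thesis by simp
qed

lemma inv_count_sum: "inv_count p m = (\<Sum>i<m. \<Sum>j<m. of_bool (i < j \<and> p j < p i))"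
proof -
  have "{(i,j). i < j \<and> j < m \<and> p j < p i} = {(i,j). i < m \<and> j < m \<and> (i < j \<and> p j < p i)}" by auto
  thus ?thesis unfolding inv_count_def using card_pairs[of m "\<lambda>i j. i < j \<and> p j < p i"] by simp
qed

definition gphi :: "nat set \<Rightarrow> (nat \<Rightarrow> bool) \<Rightarrow> bool \<Rightarrow> nat \<Rightarrow> nat" where
  "gphi S P t m = (if P m then (let i = index_in (sorted_list_of_set {x\<in>S. P x}) m in if t then 2*i+2 else 2*i+1)
     else (let i = index_in (sorted_list_of_set {x\<in>S. \<not> P x}) m in if t then 2*i+1 else 2*i+2))"

definition gperm :: "nat set \<Rightarrow> (nat \<Rightarrow> bool) \<Rightarrow> bool \<Rightarrow> nat \<Rightarrow> nat" where
  "gperm S P t i = (let C = sorted_list_of_set S in if i < length C then gphi S P t (C!i) - 1 else i)"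

lemma gen_couple:
  assumes fin: "finite S" and cb: "card {x\<in>S. P x} = k" and cw: "card {x\<in>S. \<not> P x} = k"
  shows "gperm S P t permutes {..<2*k}"
    and "even (inv_count (gperm S P t) (2*k) + (\<Sum>x\<in>{x\<in>S. P x}. \<Sum>y\<in>{x\<in>S. \<not> P x}. of_bool (x < y))
              + tri k + (if t then 0 else k))"
proof -
  define SB where "SB = {x\<in>S. P x}"
  define SW where "SW = {x\<in>S. \<not> P x}"
  define C where "C = sorted_list_of_set S"
  define jb where "jb = index_in (sorted_list_of_set SB)"
  define lw where "lw = index_in (sorted_list_of_set SW)"
  let ?phi = "gphi S P t" and ?s = "gperm S P t"
  have finB: "finite SB" and finW: "finite SW" using fin by (auto simp: SB_def SW_def)
  have cB: "card SB = k" and cW: "card SW = k" using cb cw by (auto simp: SB_def SW_def)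
  have SU: "S = SB \<union> SW" and disj: "SB \<inter> SW = {}" by (auto simp: SB_def SW_def)
  have cS: "card S = 2*k" using card_Un_disjoint[OF finB finW disj] SU cB cW by simp
  have phiB: "x \<in> SB \<Longrightarrow> ?phi x = (if t then 2 * jb x + 2 else 2 * jb x + 1)" for x
    by (simp add: gphi_def SB_def jb_def Let_def)
  have phiW: "x \<in> SW \<Longrightarrow> ?phi x = (if t then 2 * lw x + 1 else 2 * lw x + 2)" for x
    by (simp add: gphi_def SW_def lw_def Let_def)
  have jbk: "x \<in> SB \<Longrightarrow> jb x < k" for x using sls_idx(1)[OF finB] cB jb_def by auto
  have lwk: "x \<in> SW \<Longrightarrow> lw x < k" for x using sls_idx(1)[OF finW] cW lw_def by auto
  have jb_inj: "x \<in> SB \<Longrightarrow> y \<in> SB \<Longrightarrow> jb x = jb y \<Longrightarrow> x = y" for x y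
    using sls_idx(2)[OF finB] jb_def by metis
  have lw_inj: "x \<in> SW \<Longrightarrow> y \<in> SW \<Longrightarrow> lw x = lw y \<Longrightarrow> x = y" for x y
    using sls_idx(2)[OF finW] lw_def by metis
  have phi_rng: "x \<in> S \<Longrightarrow> 1 \<le> ?phi x \<and> ?phi x \<le> 2*k" for x
    using SU phiB phiW jbk lwk by fastforce
  have phi_inj: "x \<in> S \<Longrightarrow> y \<in> S \<Longrightarrow> ?phi x = ?phi y \<Longrightarrow> x = y" for x y
  proof -
    assume x: "x \<in> S" and y: "y \<in> S" and e: "?phi x = ?phi y"
    consider "x \<in> SB" "y \<in> SB" | "x \<in> SB" "y \<in> SW" | "x \<in> SW" "y \<in> SB" | "x \<in> SW" "y \<in> SW"
      using x y SU by blast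
    thus "x = y"
    proof cases
      case 1 thus ?thesis using e phiB jb_inj by (cases t) auto
    next
      case 2
      have "even (?phi x) \<noteq> even (?phi y)" using phiB[OF 2(1)] phiW[OF 2(2)] by (cases t) simp_all
      thus ?thesis using e by simp
    next
      case 3
      have "even (?phi x) \<noteq> even (?phi y)" using phiW[OF 3(1)] phiB[OF 3(2)] by (cases t) simp_all
      thus ?thesis using e by simp
    next
      case 4 thus ?thesis using e phiW lw_inj by (cases t) auto
    qed
  qed
  have bC: "bij_betw (\<lambda>i. C!i) {..<2*k} S"
    using sls_basic[OF fin] cS unfolding C_def by (intro bij_betw_nth) auto
  have lenC: "length C = 2*k" using sls_basic[OF fin] cS C_def by simp
  have sv: "i < 2*k \<Longrightarrow> ?s i = ?phi (C!i) - 1" for i by (simp add: gperm_def C_def[symmetric] lenC)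
  have Cin: "i < 2*k \<Longrightarrow> C!i \<in> S" for i using bC bij_betwE by blast
  have Cinj: "i < 2*k \<Longrightarrow> j < 2*k \<Longrightarrow> C!i = C!j \<Longrightarrow> i = j" for i j
    using bC unfolding bij_betw_def inj_on_def by blast
  have sub: "?s ` {..<2*k} \<subseteq> {..<2*k}"
    using sv Cin phi_rng by fastforce
  have sinj: "inj_on ?s {..<2*k}"
  proof (rule inj_onI)
    fix i j assume i: "i \<in> {..<2*k}" and j: "j \<in> {..<2*k}" and e: "?s i = ?s j"
    have a: "?phi (C!i) - 1 = ?phi (C!j) - 1" using e sv[of i] sv[of j] i j by simp
    have b: "1 \<le> ?phi (C!i)" "1 \<le> ?phi (C!j)" using phi_rng Cin i j by auto
    from a b have "?phi (C!i) = ?phi (C!j)" by linarith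
    thus "i = j" using phi_inj Cin Cinj i j by blast
  qed
  have bs: "bij_betw ?s {..<2*k} {..<2*k}"
    using endo_inj_surj[OF finite_lessThan sub sinj] sinj by (simp add: bij_betw_def)
  show perm: "?s permutes {..<2*k}"
    by (rule bij_imp_permutes[OF bs]) (simp add: gperm_def C_def[symmetric] lenC)
  let ?f = "\<lambda>x y. of_bool (x < y \<and> ?phi y < ?phi x) :: nat"
  have "inv_count ?s (2*k) = (\<Sum>i<2*k. \<Sum>j<2*k. ?f (C!i) (C!j))"
    unfolding inv_count_sum
  proof (intro sum.cong refl)
    fix i j assume i: "i \<in> {..<2*k}" and j: "j \<in> {..<2*k}"
    have "i < j \<longleftrightarrow> C!i < C!j" using sls_less_iff[OF fin, of i j] i j cS C_def by simp
    moreover have "?s j < ?s i \<longleftrightarrow> ?phi (C!j) < ?phi (C!i)" using sv i j phi_rng Cin by fastforce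
    ultimately show "of_bool (i < j \<and> ?s j < ?s i) = ?f (C!i) (C!j)" by simp
  qed
  also have "\<dots> = (\<Sum>x\<in>S. \<Sum>y\<in>S. ?f x y)"
    using sum.reindex_bij_betw[OF bC, of "\<lambda>x. \<Sum>y\<in>S. ?f x y"]
          sum.reindex_bij_betw[OF bC, of "\<lambda>y. ?f _ y"] by simp
  also have "\<dots> = (\<Sum>x\<in>SB. \<Sum>y\<in>SW. ?f x y) + (\<Sum>x\<in>SW. \<Sum>y\<in>SB. ?f x y)"
  proof -
    have zB: "(\<Sum>x\<in>SB. \<Sum>y\<in>SB. ?f x y) = 0"
    proof (intro sum.neutral ballI)
      fix x y assume x: "x \<in> SB" and y: "y \<in> SB"
      have "x < y \<Longrightarrow> jb x < jb y" using sls_idx_less_iff[OF finB x y] jb_def by simp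
      thus "?f x y = 0" using phiB[OF x] phiB[OF y] by auto
    qed
    have zW: "(\<Sum>x\<in>SW. \<Sum>y\<in>SW. ?f x y) = 0"
    proof (intro sum.neutral ballI)
      fix x y assume x: "x \<in> SW" and y: "y \<in> SW"
      have "x < y \<Longrightarrow> lw x < lw y" using sls_idx_less_iff[OF finW x y] lw_def by simp
      thus "?f x y = 0" using phiW[OF x] phiW[OF y] by auto
    qed
    have "(\<Sum>x\<in>S. \<Sum>y\<in>S. ?f x y) = (\<Sum>x\<in>S. (\<Sum>y\<in>SB. ?f x y) + (\<Sum>y\<in>SW. ?f x y))"
      unfolding SU by (intro sum.cong refl sum.union_disjoint finB finW disj)
    also have "\<dots> = (\<Sum>x\<in>SB. (\<Sum>y\<in>SB. ?f x y) + (\<Sum>y\<in>SW. ?f x y)) + (\<Sum>x\<in>SW. (\<Sum>y\<in>SB. ?f x y) + (\<Sum>y\<in>SW. ?f x y))"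
      unfolding SU by (intro sum.union_disjoint finB finW disj)
    finally show ?thesis using zB zW by (simp add: sum.distrib)
  qed
  also have "(\<Sum>x\<in>SW. \<Sum>y\<in>SB. ?f x y) = (\<Sum>x\<in>SB. \<Sum>y\<in>SW. ?f y x)" by (rule sum.swap)
  finally have inv: "inv_count ?s (2*k) = (\<Sum>x\<in>SB. \<Sum>y\<in>SW. ?f x y + ?f y x)" by (simp add: sum.distrib)
  define h where "h (j::nat) (l::nat) = (if t then of_bool (j < l) else of_bool (j \<le> l) :: nat)" for j l
  have pt: "even (?f x y + ?f y x + of_bool (x < y) + h (jb x) (lw y))" if x: "x \<in> SB" and y: "y \<in> SW" for x y
  proof -
    have "x \<noteq> y" using x y disj by blast
    thus ?thesis using phiB[OF x] phiW[OF y] unfolding h_def by (cases t; cases "x < y") auto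
  qed
  have hs: "(\<Sum>x\<in>SB. \<Sum>y\<in>SW. h (jb x) (lw y)) = (\<Sum>j<k. \<Sum>l<k. h j l)"
  proof -
    have bB: "bij_betw jb SB {..<k}" using sls_idx_bij[OF finB] cB jb_def by simp
    have bW: "bij_betw lw SW {..<k}" using sls_idx_bij[OF finW] cW lw_def by simp
    show ?thesis using sum.reindex_bij_betw[OF bB, of "\<lambda>j. \<Sum>l<k. h j l"]
          sum.reindex_bij_betw[OF bW, of "\<lambda>l. h _ l"] by simp
  qed
  have hv: "(\<Sum>j<k. \<Sum>l<k. h j l) = tri k + (if t then 0 else k)"
  proof (cases t)
    case True thus ?thesis unfolding h_def tri_sum by simp
  next
    case False
    have "(\<Sum>j<k. \<Sum>l<k. h j l) = (\<Sum>j<k. \<Sum>l<k. of_bool (j < l) + of_bool (j = l))"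
      unfolding h_def using False by (intro sum.cong refl) auto
    also have "\<dots> = (\<Sum>j<k. (\<Sum>l<k. of_bool (j < l)) + (1::nat))"
    proof (intro sum.cong refl)
      fix j assume j: "j \<in> {..<k}"
      have "(\<Sum>l<k. of_bool (j = l) :: nat) = 1"
      proof -
        have "{..<k} \<inter> {l. j = l} = {j}" using j by auto
        thus ?thesis by simp
      qed
      thus "(\<Sum>l<k. of_bool (j < l) + of_bool (j = l)) = (\<Sum>l<k. of_bool (j < l)) + (1::nat)"
        by (simp only: sum.distrib)
    qed
    also have "\<dots> = tri k + k" unfolding tri_sum by (simp only: sum.distrib) simp
    finally show ?thesis using False by simp
  qed
  have ev: "even (\<Sum>x\<in>SB. \<Sum>y\<in>SW. ?f x y + ?f y x + of_bool (x < y) + h (jb x) (lw y))"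
    using pt by (intro dvd_sum) auto
  have "(\<Sum>x\<in>SB. \<Sum>y\<in>SW. ?f x y + ?f y x + of_bool (x < y) + h (jb x) (lw y))
      = inv_count ?s (2*k) + (\<Sum>x\<in>SB. \<Sum>y\<in>SW. of_bool (x < y)) + (tri k + (if t then 0 else k))"
    unfolding inv hs[symmetric] hv[symmetric] by (simp add: sum.distrib)
  thus "even (inv_count ?s (2*k) + (\<Sum>x\<in>{x\<in>S. P x}. \<Sum>y\<in>{x\<in>S. \<not> P x}. of_bool (x < y))
              + tri k + (if t then 0 else k))"
    using ev unfolding SB_def SW_def by (simp add: add.assoc)
qed

lemma crs_set:
  assumes "x \<noteq> y" "u \<noteq> v"
  shows "(\<exists>a b c d. a < b \<and> b < c \<and> c < d \<and> {x,y} = {a,c} \<and> {u,v} = {b,d}) \<longleftrightarrow> crsN x y u v"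
proof
  assume "\<exists>a b c d. a < b \<and> b < c \<and> c < d \<and> {x,y} = {a,c} \<and> {u,v} = {b,d}"
  then obtain a b c d where h: "a < b" "b < c" "c < d" "{x,y} = {a,c}" "{u,v} = {b,d}" by blast
  have "min x y = a \<and> max x y = c" using h(1,2,4) by (auto simp: doubleton_eq_iff)
  moreover have "min u v = b \<and> max u v = d" using h(2,3,5) by (auto simp: doubleton_eq_iff)
  ultimately show "crsN x y u v" using h unfolding crsN_def by simp
next
  assume "crsN x y u v"
  thus "\<exists>a b c d. a < b \<and> b < c \<and> c < d \<and> {x,y} = {a,c} \<and> {u,v} = {b,d}"
    unfolding crsN_def
    by (rule_tac x="min x y" in exI, rule_tac x="min u v" in exI, rule_tac x="max x y" in exI,
        rule_tac x="max u v" in exI) (auto simp: min_def max_def doubleton_eq_iff)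
qed

locale bwp =
  fixes n :: nat and col :: "nat \<Rightarrow> bool" and \<rho> :: "nat set set"
  assumes bal: "balanced_colouring n col" and pr: "bw_pairing n col \<rho>"
begin

definition "Bs = {i \<in> nodes n. col i}"
definition "Ws = {i \<in> nodes n. \<not> col i}"

lemma finB: "finite Bs" and finW: "finite Ws" by (auto simp: Bs_def Ws_def nodes_def)
lemma cardB: "card Bs = n" using bal by (simp add: balanced_colouring_def Bs_def)
lemma cardW: "card Ws = n"
proof -
  have "nodes n = Bs \<union> Ws" "Bs \<inter> Ws = {}" by (auto simp: Bs_def Ws_def)
  hence "card (nodes n) = card Bs + card Ws" using card_Un_disjoint[OF finB finW] by simp
  thus ?thesis using cardB by (simp add: nodes_def)
qed

lemma blocks: "B \<in> \<rho> \<Longrightarrow> \<exists>b w. B = {b, w} \<and> b \<in> nodes n \<and> w \<in> nodes n \<and> col b \<and> \<not> col w"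
  using pr by (simp add: bw_pairing_def)

lemma uniq: "x \<in> nodes n \<Longrightarrow> \<exists>!B. B \<in> \<rho> \<and> x \<in> B"
  using pr by (simp add: bw_pairing_def)

lemma black_of_eq: "col b \<Longrightarrow> \<not> col w \<Longrightarrow> black_of col {b, w} = b"
  unfolding black_of_def by (rule the_equality) auto
lemma white_of_eq: "col b \<Longrightarrow> \<not> col w \<Longrightarrow> white_of col {b, w} = w"
  unfolding white_of_def by (rule the_equality) auto

definition "blk x = (THE B. B \<in> \<rho> \<and> x \<in> B)"

lemma blk: "x \<in> nodes n \<Longrightarrow> blk x \<in> \<rho> \<and> x \<in> blk x"
  unfolding blk_def using theI'[OF uniq] by blast
lemma blk_unique: "x \<in> nodes n \<Longrightarrow> B \<in> \<rho> \<Longrightarrow> x \<in> B \<Longrightarrow> blk x = B"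
  unfolding blk_def using uniq by (metis (mono_tags, lifting) the_equality)

lemma blk_black: 
  assumes "b \<in> Bs"
  shows "blk b = {b, white_of col (blk b)} \<and> black_of col (blk b) = b \<and> white_of col (blk b) \<in> Ws"
proof -
  have bn: "b \<in> nodes n" "col b" using assms by (auto simp: Bs_def)
  obtain b' w' where h: "blk b = {b', w'}" "b' \<in> nodes n" "w' \<in> nodes n" "col b'" "\<not> col w'"
    using blocks blk[OF bn(1)] by blast
  have "b = b'" using blk[OF bn(1)] h bn(2) by auto
  thus ?thesis using h white_of_eq black_of_eq by (auto simp: Ws_def)
qed

lemma partner_eq:
  assumes "b \<in> Bs"
  shows "partner \<rho> b = white_of col (blk b)"
proof -
  let ?w = "white_of col (blk b)"
  have bn: "b \<in> nodes n" "col b" using assms by (auto simp: Bs_def)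
  have B: "blk b = {b, ?w}" and wW: "?w \<in> Ws" using blk_black[OF assms] by auto
  have ne: "?w \<noteq> b" using wW bn by (auto simp: Ws_def)
  show ?thesis unfolding partner_def
  proof (rule the_equality)
    show "{b, ?w} \<in> \<rho>" using blk[OF bn(1)] B by simp
  next
    fix y assume "{b, y} \<in> \<rho>"
    hence "blk b = {b, y}" using blk_unique[OF bn(1)] by simp
    thus "y = ?w" using B ne by (auto simp: doubleton_eq_iff)
  qed
qed

definition "bb i = blacks n col ! i"
definition "ww i = white_of col (blk (bb i))"

lemma blacks_eq: "blacks n col = sorted_list_of_set Bs" by (simp add: blacks_def Bs_def)
lemma whites_eq: "whites n col = sorted_list_of_set Ws" by (simp add: whites_def Ws_def)

lemma bb_bij: "bij_betw bb {..<n} Bs"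
  unfolding bb_def blacks_eq using sls_basic[OF finB] cardB by (intro bij_betw_nth) auto

lemma bb_in: "i < n \<Longrightarrow> bb i \<in> Bs" using bb_bij by (auto dest: bij_betwE)

lemma bb_mono: "i < j \<Longrightarrow> j < n \<Longrightarrow> bb i < bb j"
  unfolding bb_def blacks_eq using sls_less_iff[OF finB, of i j] cardB by simp

lemma blk_bb: "i < n \<Longrightarrow> blk (bb i) = {bb i, ww i} \<and> black_of col (blk (bb i)) = bb i \<and> ww i \<in> Ws"
  using blk_black[OF bb_in] by (simp add: ww_def)

lemma ww_inj: "i < n \<Longrightarrow> j < n \<Longrightarrow> ww i = ww j \<Longrightarrow> i = j"
proof -
  assume i: "i < n" and j: "j < n" and e: "ww i = ww j"
  have wn: "ww i \<in> nodes n" using blk_bb[OF i] by (simp add: Ws_def)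
  have "blk (bb i) = blk (bb j)"
  proof -
    have "blk (ww i) = blk (bb i)" using blk_unique[OF wn] blk[of "bb i"] bb_in[OF i] blk_bb[OF i] by (auto simp: Bs_def)
    moreover have "blk (ww i) = blk (bb j)" using blk_unique[OF wn] blk[of "bb j"] bb_in[OF j] blk_bb[OF j] e by (auto simp: Bs_def)
    ultimately show ?thesis by simp
  qed
  hence "bb i = bb j" using blk_bb[OF i] blk_bb[OF j] by metis
  thus "i = j" using bb_bij i j unfolding bij_betw_def inj_on_def by blast
qed

lemma ww_bij: "bij_betw ww {..<n} Ws"
proof -
  have inj: "inj_on ww {..<n}" using ww_inj by (auto intro: inj_onI)
  have sub: "ww ` {..<n} \<subseteq> Ws" using blk_bb by auto
  have "card (ww ` {..<n}) = card Ws" using card_image[OF inj] cardW by simp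
  hence "ww ` {..<n} = Ws" using card_subset_eq[OF finW sub] by simp
  thus ?thesis using inj by (simp add: bij_betw_def)
qed

lemma bw_ne: "i < n \<Longrightarrow> j < n \<Longrightarrow> bb i \<noteq> ww j"
  using bb_in blk_bb by (fastforce simp: Bs_def Ws_def)

lemma XX_bij: "bij_betw (\<lambda>i. blk (bb i)) {..<n} \<rho>"
proof (rule bij_betw_imageI)
  show "inj_on (\<lambda>i. blk (bb i)) {..<n}"
  proof (rule inj_onI)
    fix i j assume "i \<in> {..<n}" "j \<in> {..<n}" "blk (bb i) = blk (bb j)"
    hence "bb i = bb j" using blk_bb by (metis lessThan_iff)
    thus "i = j" using bb_bij \<open>i \<in> {..<n}\<close> \<open>j \<in> {..<n}\<close> unfolding bij_betw_def inj_on_def by blast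
  qed
  show "(\<lambda>i. blk (bb i)) ` {..<n} = \<rho>"
  proof
    show "(\<lambda>i. blk (bb i)) ` {..<n} \<subseteq> \<rho>" using blk bb_in by (auto simp: Bs_def)
    show "\<rho> \<subseteq> (\<lambda>i. blk (bb i)) ` {..<n}"
    proof
      fix B assume B: "B \<in> \<rho>"
      then obtain b w where h: "B = {b, w}" "b \<in> nodes n" "w \<in> nodes n" "col b" "\<not> col w" using blocks by blast
      have "b \<in> Bs" using h by (simp add: Bs_def)
      then obtain i where i: "i < n" "bb i = b" using bb_bij by (metis bij_betw_iff_bijections lessThan_iff)
      have "blk b = B" using blk_unique[OF h(2) B] h by simp
      thus "B \<in> (\<lambda>i. blk (bb i)) ` {..<n}" using i by auto
    qed
  qed
qed

end

context bwp begin

lemma theta_eq: "i < n \<Longrightarrow> bw_theta n col \<rho> i = index_in (sorted_list_of_set Ws) (ww i)"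
  by (simp add: bw_theta_def whites_eq partner_eq[OF bb_in] bb_def[symmetric] ww_def)

lemma theta_perm: "bw_theta n col \<rho> permutes {..<n}"
proof (rule bij_imp_permutes)
  have b1: "bij_betw (index_in (sorted_list_of_set Ws)) Ws {..<n}" using sls_idx_bij[OF finW] cardW by simp
  have "bij_betw (index_in (sorted_list_of_set Ws) \<circ> ww) {..<n} {..<n}"
    by (rule bij_betw_trans[OF ww_bij b1])
  thus "bij_betw (bw_theta n col \<rho>) {..<n} {..<n}"
    by (rule bij_betw_cong[THEN iffD1, rotated]) (simp add: theta_eq)
next
  fix x assume "x \<notin> {..<n}" thus "bw_theta n col \<rho> x = x" by (simp add: bw_theta_def)
qed

lemma sign_BW_eq: "sign_BW n col \<rho> = (-1) ^ (\<Sum>i<n. \<Sum>j<n. of_bool (i < j \<and> ww j < ww i))"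
proof -
  have "inv_count (bw_theta n col \<rho>) n = (\<Sum>i<n. \<Sum>j<n. of_bool (i < j \<and> ww j < ww i))"
    unfolding inv_count_sum
  proof (intro sum.cong refl)
    fix i j assume "i \<in> {..<n}" "j \<in> {..<n}"
    thus "of_bool (i < j \<and> bw_theta n col \<rho> j < bw_theta n col \<rho> i) = (of_bool (i < j \<and> ww j < ww i) :: nat)"
      using theta_eq sls_idx_less_iff[OF finW] blk_bb by auto
  qed
  thus ?thesis unfolding sign_BW_def using sign_inv_count[OF theta_perm] by simp
qed

lemma crossings_eq: "crossings \<rho> = (\<Sum>i<n. \<Sum>j<n. of_bool (crsN (bb i) (ww i) (bb j) (ww j)))"
proof -
  let ?X = "\<lambda>i. blk (bb i)"
  define Cr where "Cr = (\<lambda>B1 B2. \<exists>a b c d. a < (b::nat) \<and> b < c \<and> c < d \<and> B1 = {a, c} \<and> B2 = {b, d})"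
  have crdef: "crossings \<rho> = card {(B1, B2). B1 \<in> \<rho> \<and> B2 \<in> \<rho> \<and> Cr B1 B2}"
    unfolding crossings_def Cr_def by simp
  have bX: "bij_betw ?X {..<n} \<rho>" by (rule XX_bij)
  let ?g = "\<lambda>(i,j). (?X i, ?X j)"
  have img: "{(B1, B2). B1 \<in> \<rho> \<and> B2 \<in> \<rho> \<and> Cr B1 B2} = ?g ` {(i,j). i < n \<and> j < n \<and> Cr (?X i) (?X j)}"
  proof
    show "{(B1, B2). B1 \<in> \<rho> \<and> B2 \<in> \<rho> \<and> Cr B1 B2} \<subseteq> ?g ` {(i,j). i < n \<and> j < n \<and> Cr (?X i) (?X j)}"
    proof
      fix p assume "p \<in> {(B1, B2). B1 \<in> \<rho> \<and> B2 \<in> \<rho> \<and> Cr B1 B2}"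
      then obtain B1 B2 where p: "p = (B1, B2)" "B1 \<in> \<rho>" "B2 \<in> \<rho>" "Cr B1 B2" by blast
      have surj: "?X ` {..<n} = \<rho>" using bX by (simp add: bij_betw_def)
      have "B1 \<in> ?X ` {..<n}" using p(2) surj by simp
      then obtain i where i0: "i \<in> {..<n}" "B1 = ?X i" by (rule imageE)
      have "B2 \<in> ?X ` {..<n}" using p(3) surj by simp
      then obtain j where j0: "j \<in> {..<n}" "B2 = ?X j" by (rule imageE)
      have i: "i < n" "?X i = B1" and j: "j < n" "?X j = B2" using i0 j0 by auto
      have m1: "(i,j) \<in> {(i,j). i < n \<and> j < n \<and> Cr (?X i) (?X j)}" using i j p(4) by simp
      have m2: "p = ?g (i,j)" using i j p(1) by simp
      show "p \<in> ?g ` {(i,j). i < n \<and> j < n \<and> Cr (?X i) (?X j)}"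
        by (rule rev_image_eqI[where f="?g", OF m1 m2])
    qed
    show "?g ` {(i,j). i < n \<and> j < n \<and> Cr (?X i) (?X j)} \<subseteq> {(B1, B2). B1 \<in> \<rho> \<and> B2 \<in> \<rho> \<and> Cr B1 B2}"
    proof
      fix p assume "p \<in> ?g ` {(i,j). i < n \<and> j < n \<and> Cr (?X i) (?X j)}"
      then obtain q where q: "q \<in> {(i,j). i < n \<and> j < n \<and> Cr (?X i) (?X j)}" "p = ?g q" by (rule imageE)
      obtain i j where qij: "q = (i,j)" by (cases q)
      have ij: "i < n" "j < n" "Cr (?X i) (?X j)" "p = (?X i, ?X j)" using q unfolding qij by simp_all
      have "?X i \<in> \<rho>" "?X j \<in> \<rho>" using bij_betwE[OF bX] ij(1,2) by auto
      thus "p \<in> {(B1, B2). B1 \<in> \<rho> \<and> B2 \<in> \<rho> \<and> Cr B1 B2}" using ij(3,4) by simp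
    qed
  qed
  have inj: "inj_on ?g {(i,j). i < n \<and> j < n \<and> Cr (?X i) (?X j)}"
  proof (rule inj_onI)
    fix p q assume p: "p \<in> {(i,j). i < n \<and> j < n \<and> Cr (?X i) (?X j)}" and q: "q \<in> {(i,j). i < n \<and> j < n \<and> Cr (?X i) (?X j)}" and e: "?g p = ?g q"
    obtain i j where pij0: "p = (i,j)" by (cases p)
    obtain i' j' where qij0: "q = (i',j')" by (cases q)
    have pij: "p = (i,j)" "i < n" "j < n" using p pij0 by simp_all
    have qij: "q = (i',j')" "i' < n" "j' < n" using q qij0 by simp_all
    have "?X i = ?X i'" "?X j = ?X j'" using e pij qij by auto
    hence "i = i'" "j = j'" using bX pij qij unfolding bij_betw_def inj_on_def by auto
    thus "p = q" using pij qij by simp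
  qed
  have "crossings \<rho> = card {(i,j). i < n \<and> j < n \<and> Cr (?X i) (?X j)}"
    unfolding crdef img using card_image[OF inj] by simp
  also have "\<dots> = (\<Sum>i<n. \<Sum>j<n. of_bool (Cr (?X i) (?X j)))" by (rule card_pairs)
  also have "\<dots> = (\<Sum>i<n. \<Sum>j<n. of_bool (crsN (bb i) (ww i) (bb j) (ww j)))"
  proof (intro sum.cong refl)
    fix i j assume i: "i \<in> {..<n}" and j: "j \<in> {..<n}"
    have ne: "bb i \<noteq> ww i" "bb j \<noteq> ww j" using bw_ne i j by auto
    have Xi: "?X i = {bb i, ww i}" "?X j = {bb j, ww j}" using blk_bb i j by auto
    show "of_bool (Cr (?X i) (?X j)) = (of_bool (crsN (bb i) (ww i) (bb j) (ww j)) :: nat)"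
      unfolding Xi Cr_def by (simp only: crs_set[OF ne])
  qed
  finally show ?thesis .
qed

definition "ex i = (max (bb i) (ww i) - min (bb i) (ww i) + a_count col (bb i) (ww i) - 1) div 2"

lemma prod_eq: "(\<Prod>B\<in>\<rho>. pair_sign col (black_of col B) (white_of col B)) = (-1) ^ (\<Sum>i<n. ex i)"
proof -
  have "(\<Prod>B\<in>\<rho>. pair_sign col (black_of col B) (white_of col B))
      = (\<Prod>i<n. pair_sign col (black_of col (blk (bb i))) (white_of col (blk (bb i))))"
    using prod.reindex_bij_betw[OF XX_bij, of "\<lambda>B. pair_sign col (black_of col B) (white_of col B)"] by simp
  also have "\<dots> = (\<Prod>i<n. (-1) ^ ex i)"
  proof (intro prod.cong refl)
    fix i assume "i \<in> {..<n}"
    hence "i < n" by simp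
    hence "black_of col (blk (bb i)) = bb i" using blk_bb by blast
    thus "pair_sign col (black_of col (blk (bb i))) (white_of col (blk (bb i))) = (-1) ^ ex i"
      by (simp add: pair_sign_def ex_def ww_def[symmetric])
  qed
  also have "\<dots> = (-1) ^ (\<Sum>i<n. ex i)" by (rule power_sum[symmetric])
  finally show ?thesis .
qed

lemma nodes_ge1: "x \<in> nodes n \<Longrightarrow> 1 \<le> x" by (simp add: nodes_def)

lemma ex_parity: "i < n \<Longrightarrow> even (ex i + dR col (ww i) div 2 + (dR col (bb i) + 1) div 2 + of_bool (ww i < bb i))"
proof -
  assume i: "i < n"
  have h: "bb i \<in> Bs" "ww i \<in> Ws" "bb i \<noteq> ww i" using bb_in[OF i] blk_bb[OF i] bw_ne[OF i i] by auto
  have "1 \<le> bb i" "1 \<le> ww i" "col (bb i)" "\<not> col (ww i)" using h by (auto simp: Bs_def Ws_def nodes_def)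
  thus ?thesis unfolding ex_def using exp_parity[of "bb i" "ww i" col] h(3) by blast
qed

lemma sum_ex_parity:
  "even ((\<Sum>i<n. ex i) + (\<Sum>x\<in>Ws. dR col x div 2) + (\<Sum>x\<in>Bs. (dR col x + 1) div 2) + (\<Sum>i<n. of_bool (ww i < bb i)))"
proof -
  have "(\<Sum>x\<in>Ws. dR col x div 2) = (\<Sum>i<n. dR col (ww i) div 2)"
    using sum.reindex_bij_betw[OF ww_bij, of "\<lambda>x. dR col x div 2"] by simp
  moreover have "(\<Sum>x\<in>Bs. (dR col x + 1) div 2) = (\<Sum>i<n. (dR col (bb i) + 1) div 2)"
    using sum.reindex_bij_betw[OF bb_bij, of "\<lambda>x. (dR col x + 1) div 2"] by simp
  moreover have "even (\<Sum>i<n. ex i + dR col (ww i) div 2 + (dR col (bb i) + 1) div 2 + of_bool (ww i < bb i))"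
    using ex_parity by (intro dvd_sum) auto
  ultimately show ?thesis by (simp add: sum.distrib)
qed

lemma Pp_eq: "(\<Sum>i<n. \<Sum>j<n. of_bool (ww i < bb j) :: nat) = (\<Sum>x\<in>Ws. \<Sum>y\<in>Bs. of_bool (x < y))"
proof -
  have "(\<Sum>x\<in>Ws. \<Sum>y\<in>Bs. of_bool (x < y) :: nat) = (\<Sum>i<n. \<Sum>y\<in>Bs. of_bool (ww i < y))"
    using sum.reindex_bij_betw[OF ww_bij, of "\<lambda>x. \<Sum>y\<in>Bs. of_bool (x < y) :: nat"] by simp
  also have "\<dots> = (\<Sum>i<n. \<Sum>j<n. of_bool (ww i < bb j))"
    using sum.reindex_bij_betw[OF bb_bij, of "\<lambda>y. of_bool (ww _ < y) :: nat"] by simp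
  finally show ?thesis by simp
qed

end

lemma nbR_card: "nbR c L = card {x. 1 \<le> x \<and> x \<le> L \<and> c x}"
proof (induction L)
  case 0 show ?case by simp
next
  case (Suc L)
  have e: "{x. 1 \<le> x \<and> x \<le> Suc L \<and> c x} = (if c (Suc L) then insert (Suc L) {x. 1 \<le> x \<and> x \<le> L \<and> c x} else {x. 1 \<le> x \<and> x \<le> L \<and> c x})"
    by (auto simp: le_Suc_eq)
  have f: "finite {x. 1 \<le> x \<and> x \<le> L \<and> c x}" by (rule finite_subset[of _ "{..L}"]) auto
  show ?case using Suc f unfolding e by simp
qed

lemma nwR_card: "nwR c L = card {x. 1 \<le> x \<and> x \<le> L \<and> \<not> c x}"
proof (induction L)
  case 0 show ?case by simp
next
  case (Suc L)
  have e: "{x. 1 \<le> x \<and> x \<le> Suc L \<and> \<not> c x} = (if \<not> c (Suc L) then insert (Suc L) {x. 1 \<le> x \<and> x \<le> L \<and> \<not> c x} else {x. 1 \<le> x \<and> x \<le> L \<and> \<not> c x})"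
    by (auto simp: le_Suc_eq)
  have f: "finite {x. 1 \<le> x \<and> x \<le> L \<and> \<not> c x}" by (rule finite_subset[of _ "{..L}"]) auto
  show ?case using Suc f unfolding e by simp
qed

definition SBl :: "(nat \<Rightarrow> bool) \<Rightarrow> nat \<Rightarrow> nat set" where "SBl c L = {m. 1 \<le> m \<and> m + 1 \<le> L \<and> c m \<and> c (m+1)}"
definition SWl :: "(nat \<Rightarrow> bool) \<Rightarrow> nat \<Rightarrow> nat set" where "SWl c L = {m. 1 \<le> m \<and> m + 1 \<le> L \<and> \<not> c m \<and> \<not> c (m+1)}"

lemma SBl_fin: "finite (SBl c L)" unfolding SBl_def by (rule finite_subset[of _ "{..L}"]) auto
lemma SWl_fin: "finite (SWl c L)" unfolding SWl_def by (rule finite_subset[of _ "{..L}"]) auto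

lemma SBl_Suc: "SBl c (Suc L) = (if 1 \<le> L \<and> c L \<and> c (Suc L) then insert L (SBl c L) else SBl c L)"
  by (auto simp: SBl_def le_Suc_eq)
lemma SWl_Suc: "SWl c (Suc L) = (if 1 \<le> L \<and> \<not> c L \<and> \<not> c (Suc L) then insert L (SWl c L) else SWl c L)"
  by (auto simp: SWl_def le_Suc_eq)
lemma L_notin: "L \<notin> SBl c L" "L \<notin> SWl c L" by (auto simp: SBl_def SWl_def)

lemma kbR_card: "kbR c L = card (SBl c L)"
proof (induction L)
  case 0 show ?case by (simp add: SBl_def)
next
  case (Suc L) show ?case using Suc SBl_fin[of c L] L_notin(1)[of L c] by (simp add: SBl_Suc)
qed

lemma kwR_card: "kwR c L = card (SWl c L)"
proof (induction L)
  case 0 show ?case by (simp add: SWl_def)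
next
  case (Suc L) show ?case using Suc SWl_fin[of c L] L_notin(2)[of L c] by (simp add: SWl_Suc)
qed

lemma QR_sum: "QR c L = (\<Sum>x\<in>{1..L}. qterm c x)"
  by (induction L) (simp_all add: atLeastAtMostSuc_conv add.commute)

lemma PR_sum: "PR c L = (\<Sum>x\<in>{x. 1 \<le> x \<and> x \<le> L \<and> \<not> c x}. \<Sum>y\<in>{y. 1 \<le> y \<and> y \<le> L \<and> c y}. of_bool (x < y))"
proof (induction L)
  case 0 show ?case by simp
next
  case (Suc L)
  let ?W = "{x. 1 \<le> x \<and> x \<le> L \<and> \<not> c x}" and ?B = "{y. 1 \<le> y \<and> y \<le> L \<and> c y}"
  have fW: "finite ?W" by (rule finite_subset[of _ "{..L}"]) auto
  have fB: "finite ?B" by (rule finite_subset[of _ "{..L}"]) auto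
  show ?case
  proof (cases "c (Suc L)")
    case True
    have eW: "{x. 1 \<le> x \<and> x \<le> Suc L \<and> \<not> c x} = ?W" using True by (auto simp: le_Suc_eq)
    have eB: "{y. 1 \<le> y \<and> y \<le> Suc L \<and> c y} = insert (Suc L) ?B" using True by (auto simp: le_Suc_eq)
    have "(\<Sum>x\<in>?W. \<Sum>y\<in>insert (Suc L) ?B. of_bool (x < y) :: nat) = (\<Sum>x\<in>?W. (\<Sum>y\<in>?B. of_bool (x < y)) + 1)"
      using fB by (intro sum.cong refl) auto
    also have "\<dots> = PR c L + nwR c L" using Suc by (simp add: sum.distrib sum_Suc nwR_card)
    finally show ?thesis using True unfolding eW eB by simp
  next
    case False
    have eW: "{x. 1 \<le> x \<and> x \<le> Suc L \<and> \<not> c x} = insert (Suc L) ?W" using False by (auto simp: le_Suc_eq)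
    have eB: "{y. 1 \<le> y \<and> y \<le> Suc L \<and> c y} = ?B" using False by (auto simp: le_Suc_eq)
    have z: "(\<Sum>y\<in>?B. of_bool (Suc L < y) :: nat) = 0" by (intro sum.neutral) auto
    have "(\<Sum>x\<in>insert (Suc L) ?W. \<Sum>y\<in>?B. of_bool (x < y) :: nat) = (\<Sum>x\<in>?W. \<Sum>y\<in>?B. of_bool (x < y))"
      using fW z by (subst sum.insert) auto
    thus ?thesis using False Suc unfolding eW eB by simp
  qed
qed

lemma BWR_sum: "BWR c L = (\<Sum>x\<in>SBl c L. \<Sum>y\<in>SWl c L. of_bool (x < y))"
proof (induction L)
  case 0 show ?case by (simp add: SBl_def)
next
  case (Suc L)
  show ?case
  proof (cases "1 \<le> L \<and> c L \<and> c (Suc L)")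
    case True
    have z: "(\<Sum>y\<in>SWl c L. of_bool (L < y) :: nat) = 0" by (intro sum.neutral) (auto simp: SWl_def)
    have "(\<Sum>x\<in>insert L (SBl c L). \<Sum>y\<in>SWl c L. of_bool (x < y) :: nat) = (\<Sum>x\<in>SBl c L. \<Sum>y\<in>SWl c L. of_bool (x < y))"
      using SBl_fin[of c L] L_notin(1)[of L c] z by (subst sum.insert) auto
    thus ?thesis using True Suc by (simp add: SBl_Suc SWl_Suc)
  next
    case nb: False
    show ?thesis
    proof (cases "1 \<le> L \<and> \<not> c L \<and> \<not> c (Suc L)")
      case True
      have "(\<Sum>x\<in>SBl c L. \<Sum>y\<in>insert L (SWl c L). of_bool (x < y) :: nat) = (\<Sum>x\<in>SBl c L. (\<Sum>y\<in>SWl c L. of_bool (x < y)) + 1)"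
        using SWl_fin[of c L] L_notin(2)[of L c] by (intro sum.cong refl) (auto simp: SBl_def)
      also have "\<dots> = BWR c L + kbR c L" using Suc by (simp add: sum.distrib sum_Suc kbR_card)
      finally show ?thesis using True nb by (simp add: SBl_Suc SWl_Suc)
    next
      case False
      have e: "SBl c (Suc L) = SBl c L" "SWl c (Suc L) = SWl c L"
        using nb False unfolding SBl_Suc SWl_Suc by presburger+
      have b: "BWR c (Suc L) = BWR c L" unfolding BWR.simps by (subst if_not_P[OF False]) simp
      show ?thesis using Suc unfolding e b by simp
    qed
  qed
qed

lemma even_mult_Suc: "even (x * Suc x)" by (cases "even x") auto

lemma arfinA: "even (BW + tri (kb+1) + tri n + BW + Fv n n kb (kb+1) True)"
proof -
  have "BW + tri (kb+1) + tri n + BW + Fv n n kb (kb+1) True = 2*(BW + tri kb + kb + tri n + n*kb + n) + kb * Suc kb"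
    by (simp add: Fv_def algebra_simps)
  thus ?thesis using even_mult_Suc[of kb] by simp
qed

lemma arfinB: "even ((BW + (kw+1)) + tri (kw+1) + (kw+1) + tri n + BW + Fv n n (kw+1) kw False)"
proof -
  have "(BW + (kw+1)) + tri (kw+1) + (kw+1) + tri n + BW + Fv n n (kw+1) kw False
      = 2*(BW + kw + 1 + tri kw + tri n + n*(kw+1)) + 2*kw + kw * Suc kw"
    by (simp add: Fv_def algebra_simps)
  thus ?thesis using even_mult_Suc[of kw] by simp
qed

lemma arfinC: "even (BW + tri k + (if c1 then 0 else k) + tri n + BW + Fv n n k k c1)"
proof -
  have eq: "BW + tri k + (if c1 then 0 else k) + tri n + BW + Fv n n k k c1
      = 2*(BW + tri k + tri n + n*k + (if c1 then n else 0)) + k*k + k"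
    by (cases c1) (simp_all add: Fv_def algebra_simps)
  have ev: "even (k*k + k)" using even_mult_Suc[of k] by (simp add: algebra_simps)
  show ?thesis unfolding eq using ev by simp
qed

lemma neg1_eq: "even (a + b) \<Longrightarrow> (-1::int) ^ a = (-1) ^ b"
  by (metis even_add neg_one_even_power neg_one_odd_power)

context bwp begin

lemma couple_perm_eq: "couple_perm n col = gperm (couples n col) col (col 1)"
  by (rule ext) (simp add: couple_perm_def gperm_def couple_phi_def gphi_def black_couples_def white_couples_def)

lemma SBc_eq: "1 \<le> n \<Longrightarrow> {m\<in>couples n col. col m} = SBl col (2*n) \<union> (if col (2*n) \<and> col 1 then {2*n} else {})"
  unfolding couples_def nodes_def cnext_def SBl_def by (auto split: if_splits)

lemma SWc_eq: "1 \<le> n \<Longrightarrow> {m\<in>couples n col. \<not> col m} = SWl col (2*n) \<union> (if \<not> col (2*n) \<and> \<not> col 1 then {2*n} else {})"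
  unfolding couples_def nodes_def cnext_def SWl_def by (auto split: if_splits)

lemma fin_couples: "finite (couples n col)" unfolding couples_def nodes_def by simp

lemma main_pos:
  assumes n1: "1 \<le> n"
  shows "sign_c n col * sign_BW n col \<rho> * (\<Prod>B\<in>\<rho>. pair_sign col (black_of col B) (white_of col B))
         = (-1) ^ crossings \<rho>"
proof -
  define kb where "kb = kbR col (2*n)"
  define kw where "kw = kwR col (2*n)"
  define BW where "BW = BWR col (2*n)"
  have nb: "nbR col (2*n) = n"
  proof -
    have "{x. 1 \<le> x \<and> x \<le> 2*n \<and> col x} = Bs" by (auto simp: Bs_def nodes_def)
    thus ?thesis using nbR_card cardB by simp
  qed
  have nw: "nwR col (2*n) = n"
  proof -
    have "{x. 1 \<le> x \<and> x \<le> 2*n \<and> \<not> col x} = Ws" by (auto simp: Ws_def nodes_def)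
    thus ?thesis using nwR_card cardW by simp
  qed
  have EL: "2*kb + 2*n + (if col 1 then 1 else 0) + (if col (2*n) then 1 else 0)
         = 2*kw + 2*n + (if col 1 then 0 else 1) + (if col (2*n) then 0 else 1)"
    and EE: "even (BW + PR col (2*n) + QR col (2*n) + Fv n n kb kw (col 1))"
    using E_lemma[of "2*n" col] n1 nb nw unfolding kb_def kw_def BW_def by auto
  let ?SB = "{m\<in>couples n col. col m}" and ?SW = "{m\<in>couples n col. \<not> col m}"
  have n2: "2*n \<notin> SBl col (2*n)" "2*n \<notin> SWl col (2*n)" by (auto simp: SBl_def SWl_def)
  have cSB: "card ?SB = kb + (if col (2*n) \<and> col 1 then 1 else 0)"
    using SBc_eq[OF n1] SBl_fin[of col "2*n"] n2 kbR_card[of col "2*n"] unfolding kb_def by auto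
  have cSW: "card ?SW = kw + (if \<not> col (2*n) \<and> \<not> col 1 then 1 else 0)"
    using SWc_eq[OF n1] SWl_fin[of col "2*n"] n2 kwR_card[of col "2*n"] unfolding kw_def by auto
  define k where "k = card ?SB"
  have cSW': "card ?SW = k" unfolding k_def cSB cSW using EL by (cases "col 1"; cases "col (2*n)") auto
  note GC = gen_couple[OF fin_couples k_def[symmetric] cSW', of "col 1"]
  have GC1: "gperm (couples n col) col (col 1) permutes {..<2*k}" using GC(1) .
  define Ic where "Ic = inv_count (gperm (couples n col) col (col 1)) (2*k)"
  define BWc where "BWc = (\<Sum>x\<in>?SB. \<Sum>y\<in>?SW. of_bool (x < y) :: nat)"
  have X1: "even (Ic + BWc + tri k + (if col 1 then 0 else k))" using GC(2) unfolding Ic_def BWc_def .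
  have sc: "sign_c n col = (-1) ^ Ic"
    unfolding sign_c_def couple_perm_eq Ic_def using sign_inv_count[OF GC1] .
  have BWl: "BW = (\<Sum>x\<in>SBl col (2*n). \<Sum>y\<in>SWl col (2*n). of_bool (x < y))" unfolding BW_def by (rule BWR_sum)
  have X5: "even (BWc + tri k + (if col 1 then 0 else k) + tri n + BW + Fv n n kb kw (col 1))"
  proof (cases "col 1 \<and> col (2*n)")
    case True
    have eB: "?SB = insert (2*n) (SBl col (2*n))" and eW: "?SW = SWl col (2*n)"
      using SBc_eq[OF n1] SWc_eq[OF n1] True by auto
    have z: "(\<Sum>y\<in>SWl col (2*n). of_bool (2*n < y) :: nat) = 0" by (intro sum.neutral) (auto simp: SWl_def)
    have "BWc = BW" unfolding BWc_def BWl eB eW using SBl_fin[of col "2*n"] n2 z by simp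
    moreover have "k = kb + 1" "kw = kb + 1" using cSB EL True unfolding k_def by auto
    ultimately show ?thesis using arfinA[of BW kb n] True by simp
  next
    case nT: False
    show ?thesis
    proof (cases "\<not> col 1 \<and> \<not> col (2*n)")
      case True
      have eB: "?SB = SBl col (2*n)" and eW: "?SW = insert (2*n) (SWl col (2*n))"
        using SBc_eq[OF n1] SWc_eq[OF n1] True by auto
      have "BWc = (\<Sum>x\<in>SBl col (2*n). (\<Sum>y\<in>SWl col (2*n). of_bool (x < y)) + 1)"
        unfolding BWc_def eB eW using SWl_fin[of col "2*n"] n2
        by (intro sum.cong refl) (auto simp: SBl_def)
      hence "BWc = BW + kb" unfolding BWl kb_def kbR_card by (simp add: sum.distrib sum_Suc)
      moreover have "kb = kw + 1" "k = kw + 1" using cSB EL True unfolding k_def by auto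
      ultimately show ?thesis using arfinB[of BW kw n] True by (simp add: add.assoc)
    next
      case False
      have eB: "?SB = SBl col (2*n)" and eW: "?SW = SWl col (2*n)"
        using SBc_eq[OF n1] SWc_eq[OF n1] False nT by auto
      have "BWc = BW" unfolding BWc_def BWl eB eW ..
      moreover have "kb = k" "kw = k" using cSB EL False nT unfolding k_def by auto
      ultimately show ?thesis using arfinC[of BW k "col 1" n] by simp
    qed
  qed
  define Inv where "Inv = (\<Sum>i<n. \<Sum>j<n. of_bool (i < j \<and> ww j < ww i) :: nat)"
  define Cr where "Cr = (\<Sum>i<n. \<Sum>j<n. of_bool (crsN (bb i) (ww i) (bb j) (ww j)) :: nat)"
  define Pp where "Pp = (\<Sum>i<n. \<Sum>j<n. of_bool (ww i < bb j) :: nat)"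
  define Dg where "Dg = (\<Sum>i<n. of_bool (ww i < bb i) :: nat)"
  define Sx where "Sx = (\<Sum>i<n. ex i)"
  define Qw where "Qw = (\<Sum>x\<in>Ws. dR col x div 2)"
  define Qb where "Qb = (\<Sum>x\<in>Bs. (dR col x + 1) div 2)"
  have X3: "even (Inv + Cr + tri n + Pp + Dg)"
    unfolding Inv_def Cr_def Pp_def Dg_def using pair_parity[of n bb ww] bb_mono bw_ne ww_inj by blast
  have X4: "even (Sx + Qw + Qb + Dg)" unfolding Sx_def Qw_def Qb_def Dg_def by (rule sum_ex_parity)
  have PP: "PR col (2*n) = Pp"
  proof -
    have "{x. 1 \<le> x \<and> x \<le> 2*n \<and> \<not> col x} = Ws" "{x. 1 \<le> x \<and> x \<le> 2*n \<and> col x} = Bs"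
      by (auto simp: Ws_def Bs_def nodes_def)
    thus ?thesis unfolding PR_sum Pp_def Pp_eq by simp
  qed
  have QQ: "QR col (2*n) = Qw + Qb"
  proof -
    have nd: "{1..2*n} = Bs \<union> Ws" "Bs \<inter> Ws = {}" by (auto simp: Bs_def Ws_def nodes_def)
    have "QR col (2*n) = (\<Sum>x\<in>Bs. qterm col x) + (\<Sum>x\<in>Ws. qterm col x)"
      unfolding QR_sum nd(1) by (rule sum.union_disjoint[OF finB finW nd(2)])
    also have "(\<Sum>x\<in>Bs. qterm col x) = Qb" unfolding Qb_def by (intro sum.cong refl) (simp add: qterm_def Bs_def)
    also have "(\<Sum>x\<in>Ws. qterm col x) = Qw" unfolding Qw_def by (intro sum.cong refl) (simp add: qterm_def Ws_def)
    finally show ?thesis by simp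
  qed
  have X2: "even (BW + Pp + Qw + Qb + Fv n n kb kw (col 1))" using EE unfolding PP QQ by (simp add: add.assoc)
  have tot: "even (Ic + Inv + Sx + Cr)"
  proof -
    have E: "even ((Ic + BWc + tri k + (if col 1 then 0 else k)) + (BW + Pp + Qw + Qb + Fv n n kb kw (col 1))
      + (Inv + Cr + tri n + Pp + Dg) + (Sx + Qw + Qb + Dg) + (BWc + tri k + (if col 1 then 0 else k) + tri n + BW + Fv n n kb kw (col 1)))"
      using X1 X2 X3 X4 X5 by simp
    have eq: "(Ic + BWc + tri k + (if col 1 then 0 else k)) + (BW + Pp + Qw + Qb + Fv n n kb kw (col 1))
      + (Inv + Cr + tri n + Pp + Dg) + (Sx + Qw + Qb + Dg) + (BWc + tri k + (if col 1 then 0 else k) + tri n + BW + Fv n n kb kw (col 1))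
      = (Ic + Inv + Sx + Cr) + 2 * (BWc + tri k + (if col 1 then 0 else k) + BW + Pp + Qw + Qb + Fv n n kb kw (col 1) + tri n + Dg)"
      by simp
    have "even ((Ic + Inv + Sx + Cr) + 2 * (BWc + tri k + (if col 1 then 0 else k) + BW + Pp + Qw + Qb + Fv n n kb kw (col 1) + tri n + Dg))"
      using E unfolding eq .
    thus ?thesis by simp
  qed
  have "sign_c n col * sign_BW n col \<rho> * (\<Prod>B\<in>\<rho>. pair_sign col (black_of col B) (white_of col B))
      = (-1) ^ Ic * (-1) ^ Inv * (-1) ^ Sx"
    unfolding sc sign_BW_eq prod_eq Inv_def Sx_def ..
  also have "\<dots> = (-1) ^ (Ic + Inv + Sx)" by (simp add: power_add)
  also have "\<dots> = (-1) ^ Cr" using tot by (intro neg1_eq) (simp add: add.assoc)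
  also have "Cr = crossings \<rho>" unfolding Cr_def crossings_eq ..
  finally show ?thesis .
qed

end

theorem mainTheorem5:
  fixes n :: nat and col :: "nat \<Rightarrow> bool" and \<rho> :: "nat set set"
  assumes "balanced_colouring n col"
    and "bw_pairing n col \<rho>"
  shows "sign_c n col * sign_BW n col \<rho> *
           (\<Prod>B\<in>\<rho>. pair_sign col (black_of col B) (white_of col B))
         = (-1) ^ crossings \<rho>"
proof (cases "n = 0")
  case False
  interpret bwp n col \<rho> using assms by unfold_locales
  show ?thesis using False by (intro main_pos) simp
next
  case True
  have nd: "nodes n = {}" using True by (simp add: nodes_def)
  have r: "\<rho> = {}"
  proof (rule ccontr)
    assume "\<rho> \<noteq> {}"
    then obtain B where B: "B \<in> \<rho>" by blast
    have all: "\<forall>B\<in>\<rho>. \<exists>b w. B = {b, w} \<and> b \<in> nodes n \<and> w \<in> nodes n \<and> col b \<and> \<not> col w"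
      using assms(2) unfolding bw_pairing_def by (rule conjunct1)
    obtain b w where "b \<in> nodes n" using bspec[OF all B] by blast
    thus False using nd by simp
  qed
  have c: "couples n col = {}" unfolding couples_def nd by simp
  have cp: "couple_perm n col = id" by (rule ext) (simp add: couple_perm_def c)
  have bt: "bw_theta n col \<rho> = id" by (rule ext) (simp add: bw_theta_def True)
  have cr: "crossings \<rho> = 0" unfolding crossings_def r by simp
  show ?thesis unfolding sign_c_def sign_BW_def cp bt cr by (simp add: r)
qed

end
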